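(* Let $\mathcal{P}$ be a bounded distribution (as defined in the context) and let $\bm{\pi}_{\mathrm{bounded}}$ be the online policy (Algorithm 1) described in the context, run with parameter $C=9$. Then $\bm{\pi}_{\mathrm{bounded}}$ is a feasible online policy and $$\mathrm{Regret}_{\mathcal{P}}(\bm{\pi}_{\mathrm{bounded}})=\widetilde{\mathcal{O}}(\sqrt{T}),$$ i.e., the regret is at most $\sqrt{T}$ times a factor polylogarithmic in $T$, with constants that do not depend on $T$.
   Context: Online linear programming with replenishment. There are $m$ resources and a horizon $T$. Tuples $(r_t,\bm{a}_t,\bm{b}_t)\in\mathbb{R}\times\mathbb{R}^m\times\mathbb{R}^m_{\geq 0}$, $t=1,\dots,T$, are drawn i.i.d. from an unknown distribution $\mathcal{P}$. Inventory of every resource starts at $0$. In period $t$ each resource $j$ is first replenished by $b_{jt}$; then the order $(r_t,\bm{a}_t)$ is revealed and the decision maker chooses $x_t\in\{0,1\}$ (possibly at random) based only on $(r_k,\bm{a}_k,\bm{b}_k,x_k)_{k<t}$ and $(r_t,\bm{a}_t,\bm{b}_t)$; accepting earns $r_t$ and consumes $\bm{a}_t$ (negative entries mean restocking). A policy is feasible if for every realization, $\sum_{k=1}^t a_{jk}x_k\le\sum_{k=1}^t b_{jk}$ for all $j\in[m]$, $t\in[T]$. The hindsight optimum $R^*$ is the maximum of $\sum_{t=1}^T r_tx_t$ over $\bm{x}\in\{0,1\}^T$ subject to these prefix constraints, and $\mathrm{Regret}_{\mathcal{P}}(\bm{\pi})=\mathbb{E}_{\mathcal{P}}[R^*-\sum_{t=1}^T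 r_tx_t]$ where $x_t$ are the decisions of $\bm{\pi}$. Bounded distribution: there are constants $\bar r,\bar a,\bar b>0$ with $|r|<\bar r$, $\|\bm{a}\|_2<\bar a$, $\|\bm{b}\|_\infty<\bar b$ almost surely, and $\underline{b}>0$ with $\mathbb{E}[b_j]>\underline{b}$ for all $j\in[m]$. Algorithm 1 (inputs $\bar r,\bar a,\bar b,\underline b,T$, and a parameter $C>0$): set $W=2+\left\lceil\max\left(\frac{8\sqrt m\bar r}{\underline b},\frac{24\sqrt m(\bar b+\bar a)\bar b^2}{\underline b^2},\frac{\bar r+2m(\bar b^2+\bar a^2)}{\sqrt m(\bar b+\bar a)}\right)\right\rceil$ and $\kappa=\lceil 4W\sqrt{CT\ln T}/\underline b\rceil$. Initialize $p^1_j=0$, $\ell_{j,1}=0$ for all $j$. For $t=1,\dots,T$: observe $(r_t,\bm a_t,\bm b_t)$. If $t\le\kappa$, set $x_t=0$ and $p^{t+1}_j=0$ for all $j$. Otherwise set $x_t=\mathbb{I}(\forall j\in[m],\ \ell_{j,t}\ge a_{jt})\cdot\mathbb{I}(r_t>\langle\bm p^t,\bm a_t\rangle)$ and $p^{t+1}_j=\left[p^t_j-\frac{1}{\sqrt{CT\ln T}}\left(b_{jt}-a_{jt}\mathbb{I}(r_t>\langle\bm p^t,\bm a_t\rangle)\right)\right]^+$ for all $j$. Finally set $\ell_{j,t+1}=\ell_{j,t}+b_{jt}-a_{jt}x_t$ for all $j$. Here $[y]^+=\max(y,0)$. *)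

theory Defs
  imports "HOL-Probability.Probability"
begin

text \<open>A sample (one period) is a triple (r, a, b) with r real, a, b in R^m.
  The resource index type is 'm (finite), so m = CARD('m).\<close>

type_synonym 'm sample = "real \<times> (real ^ 'm) \<times> (real ^ 'm)"

definition rew :: "'m sample \<Rightarrow> real" where "rew z = fst z"
definition cons :: "'m sample \<Rightarrow> real ^ 'm" where "cons z = fst (snd z)"
definition repl :: "'m sample \<Rightarrow> real ^ 'm" where "repl z = snd (snd z)"

definition alg_W :: "nat \<Rightarrow> real \<Rightarrow> real \<Rightarrow> real \<Rightarrow> real \<Rightarrow> real" where
  "alg_W m rb ab bb bl = 2 + real_of_int (ceiling (max (8 * sqrt m * rb / bl)
      (max (24 * sqrt m * (bb + ab) * bb ^ 2 / bl ^ 2)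
           ((rb + 2 * m * (bb ^ 2 + ab ^ 2)) / (sqrt m * (bb + ab))))))"

definition alg_kappa :: "nat \<Rightarrow> real \<Rightarrow> real \<Rightarrow> real \<Rightarrow> real \<Rightarrow> real \<Rightarrow> nat \<Rightarrow> int" where
  "alg_kappa m rb ab bb bl C T =
     ceiling (4 * alg_W m rb ab bb bl * sqrt (C * T * ln T) / bl)"

text \<open>Decision x_t in period t (1-based), given the state (p^t, l_t) and the sample of period t.\<close>
definition alg_dec :: "real \<Rightarrow> real \<Rightarrow> real \<Rightarrow> real \<Rightarrow> real \<Rightarrow> nat \<Rightarrow> nat \<Rightarrow>
    (real ^ ('m::finite)) \<times> (real ^ 'm) \<Rightarrow> 'm sample \<Rightarrow> real" where
  "alg_dec rb ab bb bl C T t st z =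
     (if int t \<le> alg_kappa CARD('m) rb ab bb bl C T then 0
      else if (\<forall>j. snd st $ j \<ge> cons z $ j) \<and> rew z > inner (fst st) (cons z) then 1 else 0)"

definition alg_step :: "real \<Rightarrow> real \<Rightarrow> real \<Rightarrow> real \<Rightarrow> real \<Rightarrow> nat \<Rightarrow> nat \<Rightarrow>
    (real ^ ('m::finite)) \<times> (real ^ 'm) \<Rightarrow> 'm sample \<Rightarrow> (real ^ 'm) \<times> (real ^ 'm)" where
  "alg_step rb ab bb bl C T t st z =
     (let x = alg_dec rb ab bb bl C T t st z;
          p' = (if int t \<le> alg_kappa CARD('m) rb ab bb bl C T then 0
                else (\<chi> j. max 0 (fst st $ j - (1 / sqrt (C * T * ln T)) *
                        (repl z $ j - cons z $ j *
                           (if rew z > inner (fst st) (cons z) then 1 else 0)))));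
          l' = snd st + repl z - x *\<^sub>R cons z
      in (p', l'))"

text \<open>State (p^{t+1}, l_{t+1}) after the first t periods; the sample of period k is omega k
  (k = 1, ..., T; omega 0 is unused).\<close>
primrec alg_state :: "real \<Rightarrow> real \<Rightarrow> real \<Rightarrow> real \<Rightarrow> real \<Rightarrow> nat \<Rightarrow> nat \<Rightarrow>
    (nat \<Rightarrow> ('m::finite) sample) \<Rightarrow> (real ^ 'm) \<times> (real ^ 'm)" where
  "alg_state rb ab bb bl C T 0 \<omega> = (0, 0)"
| "alg_state rb ab bb bl C T (Suc t) \<omega> =
     alg_step rb ab bb bl C T (Suc t) (alg_state rb ab bb bl C T t \<omega>) (\<omega> (Suc t))"

definition alg_x :: "real \<Rightarrow> real \<Rightarrow> real \<Rightarrow> real \<Rightarrow> real \<Rightarrow> nat \<Rightarrow>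
    (nat \<Rightarrow> ('m::finite) sample) \<Rightarrow> nat \<Rightarrow> real" where
  "alg_x rb ab bb bl C T \<omega> t =
     alg_dec rb ab bb bl C T t (alg_state rb ab bb bl C T (t - 1) \<omega>) (\<omega> t)"

definition prefix_feasible :: "nat \<Rightarrow> (nat \<Rightarrow> ('m::finite) sample) \<Rightarrow> (nat \<Rightarrow> real) \<Rightarrow> bool" where
  "prefix_feasible T \<omega> x \<longleftrightarrow>
     (\<forall>j. \<forall>t\<in>{1..T}. (\<Sum>k=1..t. cons (\<omega> k) $ j * x k) \<le> (\<Sum>k=1..t. repl (\<omega> k) $ j))"

definition hindsight_opt :: "nat \<Rightarrow> (nat \<Rightarrow> ('m::finite) sample) \<Rightarrow> real" where
  "hindsight_opt T \<omega> = Max {(\<Sum>k\<in>S. rew (\<omega> k)) | S. S \<subseteq> {1..T} \<and>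
       prefix_feasible T \<omega> (\<lambda>k. if k \<in> S then 1 else 0)}"

definition alg_reward :: "real \<Rightarrow> real \<Rightarrow> real \<Rightarrow> real \<Rightarrow> real \<Rightarrow> nat \<Rightarrow>
    (nat \<Rightarrow> ('m::finite) sample) \<Rightarrow> real" where
  "alg_reward rb ab bb bl C T \<omega> = (\<Sum>t=1..T. rew (\<omega> t) * alg_x rb ab bb bl C T \<omega> t)"

definition bounded_dist :: "('m::finite) sample measure \<Rightarrow> real \<Rightarrow> real \<Rightarrow> real \<Rightarrow> real \<Rightarrow> bool" where
  "bounded_dist M rb ab bb bl \<longleftrightarrow>
     prob_space M \<and> sets M = sets borel \<and>
     (AE z in M. \<bar>rew z\<bar> < rb \<and> norm (cons z) < ab \<and>
                 (\<forall>j. \<bar>repl z $ j\<bar> < bb) \<and> (\<forall>j. repl z $ j \<ge> 0)) \<and>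
     (\<forall>j. (\<integral>z. repl z $ j \<partial>M) > bl)"

end

theory Submission
  imports Defs
begin


lemma mcont: "f \<in> borel_measurable N \<Longrightarrow> continuous_on UNIV g \<Longrightarrow> (\<lambda>x. g (f x)) \<in> borel_measurable N"
  by (rule measurable_compose[OF _ borel_measurable_continuous_onI])

lemma mfst[measurable (raw)]: "f \<in> borel_measurable N \<Longrightarrow> (\<lambda>x. fst (f x :: 'a::topological_space \<times> 'b::topological_space)) \<in> borel_measurable N"
  by (erule mcont) (intro continuous_intros)
lemma msnd[measurable (raw)]: "f \<in> borel_measurable N \<Longrightarrow> (\<lambda>x. snd (f x :: 'a::topological_space \<times> 'b::topological_space)) \<in> borel_measurable N"
  by (erule mcont) (intro continuous_intros)
lemma mnth[measurable (raw)]: "f \<in> borel_measurable N \<Longrightarrow> (\<lambda>x. (f x :: real^'n::finite) $ j) \<in> borel_measurable N"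
  by (erule mcont) (intro continuous_intros)
lemma mvec[measurable (raw)]:
  assumes "\<And>j. f j \<in> borel_measurable N"
  shows "(\<lambda>x. (\<chi> j. f j x) :: real^'n::finite) \<in> borel_measurable N"
proof -
  have "(\<lambda>x. (\<chi> j. f j x) :: real^'n::finite) = (\<lambda>x. \<Sum>j\<in>UNIV. f j x *\<^sub>R axis j 1)"
    by (rule ext) (simp add: vec_eq_iff axis_def if_distrib cong: if_cong)
  also have "\<dots> \<in> borel_measurable N" using assms by measurable
  finally show ?thesis .
qed
lemma mpair[measurable (raw)]: "f \<in> borel_measurable N \<Longrightarrow> g \<in> borel_measurable N \<Longrightarrow> (\<lambda>x. (f x :: 'a::second_countable_topology, g x :: 'b::second_countable_topology)) \<in> borel_measurable N"
  by (metis borel_measurable_Pair)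

lemma mrew[measurable (raw)]: "f \<in> borel_measurable N \<Longrightarrow> (\<lambda>x. rew (f x)) \<in> borel_measurable N"
  unfolding rew_def by measurable
lemma mcons[measurable (raw)]: "f \<in> borel_measurable N \<Longrightarrow> (\<lambda>x. cons (f x)) \<in> borel_measurable N"
  unfolding cons_def by measurable
lemma mrepl[measurable (raw)]: "f \<in> borel_measurable N \<Longrightarrow> (\<lambda>x. repl (f x)) \<in> borel_measurable N"
  unfolding repl_def by measurable

lemma mdec[measurable (raw)]:
  fixes S :: "_ \<Rightarrow> (real^'m::finite) \<times> (real^'m)" and Z :: "_ \<Rightarrow> 'm sample"
  assumes [measurable]: "S \<in> borel_measurable N" "Z \<in> borel_measurable N"
  shows "(\<lambda>x. alg_dec rb ab bb bl C T t (S x) (Z x)) \<in> borel_measurable N"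
  unfolding alg_dec_def by measurable

lemma mstep[measurable (raw)]:
  fixes S :: "_ \<Rightarrow> (real^'m::finite) \<times> (real^'m)" and Z :: "_ \<Rightarrow> 'm sample"
  assumes [measurable]: "S \<in> borel_measurable N" "Z \<in> borel_measurable N"
  shows "(\<lambda>x. alg_step rb ab bb bl C T t (S x) (Z x)) \<in> borel_measurable N"
  unfolding alg_step_def Let_def by measurable


locale alg_ctx =
  fixes rb ab bb bl :: real and T :: nat and mty :: "'m::finite itself"
begin

definition kap :: int where "kap = alg_kappa (CARD('m)) rb ab bb bl (9::real) T"
definition kn :: nat where "kn = nat kap"
lemma le_kap_iff: "int (Suc t) \<le> kap \<longleftrightarrow> Suc t \<le> kn"
  unfolding kn_def by linarith
definition "eta = 1 / sqrt (9 * real T * ln (real T))"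
abbreviation st :: "(nat \<Rightarrow> 'm sample) \<Rightarrow> nat \<Rightarrow> (real^'m) \<times> (real^'m)" where
  "st \<omega> t \<equiv> alg_state rb ab bb bl 9 T t \<omega>"
abbreviation P :: "(nat \<Rightarrow> 'm sample) \<Rightarrow> nat \<Rightarrow> real^'m" where "P \<omega> t \<equiv> fst (st \<omega> t)"
abbreviation Lv :: "(nat \<Rightarrow> 'm sample) \<Rightarrow> nat \<Rightarrow> real^'m" where "Lv \<omega> t \<equiv> snd (st \<omega> t)"
abbreviation X :: "(nat \<Rightarrow> 'm sample) \<Rightarrow> nat \<Rightarrow> real" where "X \<omega> t \<equiv> alg_x rb ab bb bl 9 T \<omega> t"
definition xv :: "(nat \<Rightarrow> 'm sample) \<Rightarrow> nat \<Rightarrow> real" where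
  "xv \<omega> t = (if rew (\<omega> t) > inner (P \<omega> (t-1)) (cons (\<omega> t)) then 1 else 0)"
definition G :: "(nat \<Rightarrow> 'm sample) \<Rightarrow> nat \<Rightarrow> real^'m" where
  "G \<omega> t = repl (\<omega> t) - xv \<omega> t *\<^sub>R cons (\<omega> t)"

lemma X_Suc: "X \<omega> (Suc t) = (if Suc t \<le> kn then 0 else
   if (\<forall>j. Lv \<omega> t $ j \<ge> cons (\<omega> (Suc t)) $ j) \<and> rew (\<omega> (Suc t)) > inner (P \<omega> t) (cons (\<omega> (Suc t))) then 1 else 0)"
proof -
  have "int (Suc t) \<le> alg_kappa (CARD('m)) rb ab bb bl 9 T \<longleftrightarrow> Suc t \<le> kn"
    using le_kap_iff[of t] unfolding kap_def .
  then show ?thesis by (simp add: alg_x_def alg_dec_def)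
qed

lemma Lv_Suc: "Lv \<omega> (Suc t) = Lv \<omega> t + repl (\<omega> (Suc t)) - X \<omega> (Suc t) *\<^sub>R cons (\<omega> (Suc t))"
  by (simp add: alg_step_def Let_def alg_x_def)

lemma P_Suc_warm: "Suc t \<le> kn \<Longrightarrow> P \<omega> (Suc t) = 0"
proof -
  assume "Suc t \<le> kn"
  then have "int (Suc t) \<le> alg_kappa (CARD('m)) rb ab bb bl 9 T"
    using le_kap_iff[of t] unfolding kap_def by simp
  then show ?thesis by (simp add: alg_step_def Let_def)
qed

lemma P_Suc: "kn < Suc t \<Longrightarrow> P \<omega> (Suc t) $ j = max 0 (P \<omega> t $ j - eta * G \<omega> (Suc t) $ j)"
proof -
  assume "kn < Suc t"
  then have "\<not> int (Suc t) \<le> alg_kappa (CARD('m)) rb ab bb bl 9 T"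
    using le_kap_iff[of t] unfolding kap_def by simp
  then show ?thesis by (simp add: alg_step_def Let_def eta_def G_def xv_def)
qed

lemma P_warm: "t \<le> kn \<Longrightarrow> P \<omega> t = 0"
proof (cases t)
  case 0 then show ?thesis by simp
next
  case (Suc s) then show "t \<le> kn \<Longrightarrow> ?thesis" using P_Suc_warm[of s \<omega>] by simp
qed

lemma P_nonneg: "P \<omega> t $ j \<ge> 0"
proof (cases t)
  case 0 then show ?thesis by simp
next
  case (Suc s)
  show ?thesis
  proof (cases "Suc s \<le> kn")
    case True then show ?thesis using P_Suc_warm[of s \<omega>] Suc by simp
  next
    case False then show ?thesis using P_Suc[of s \<omega> j] Suc by simp
  qed
qed

lemma X01: "X \<omega> t \<in> {0, 1}"
  by (simp add: alg_x_def alg_dec_def)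

lemma Lv_sum: "Lv \<omega> t = (\<Sum>k=1..t. repl (\<omega> k) - X \<omega> k *\<^sub>R cons (\<omega> k))"
proof (induction t)
  case 0 then show ?case by simp
next
  case (Suc t) then show ?case unfolding Lv_Suc by simp
qed

lemma Lv_nonneg:
  assumes "\<forall>t j. repl (\<omega> t) $ j \<ge> 0"
  shows "Lv \<omega> t $ j \<ge> 0"
proof (induction t)
  case 0 then show ?case by simp
next
  case (Suc t)
  have b: "repl (\<omega> (Suc t)) $ j \<ge> 0" using assms by auto
  show ?case
  proof (cases "X \<omega> (Suc t) = 1")
    case True
    then have "Lv \<omega> t $ j \<ge> cons (\<omega> (Suc t)) $ j"
      unfolding X_Suc by (auto split: if_splits)
    then show ?thesis unfolding Lv_Suc using True b by (simp del: alg_state.simps)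
  next
    case False
    then have "X \<omega> (Suc t) = 0" using X01 by blast
    then show ?thesis unfolding Lv_Suc using Suc b by (simp del: alg_state.simps)
  qed
qed

lemma feasible:
  assumes "\<forall>t j. repl (\<omega> t) $ j \<ge> 0"
  shows "prefix_feasible T \<omega> (X \<omega>)"
  unfolding prefix_feasible_def
proof (intro allI ballI)
  fix j t
  have "0 \<le> Lv \<omega> t $ j" by (rule Lv_nonneg[OF assms])
  also have "\<dots> = (\<Sum>k=1..t. repl (\<omega> k) $ j - cons (\<omega> k) $ j * X \<omega> k)"
    unfolding Lv_sum by (simp add: sum_component algebra_simps)
  finally show "(\<Sum>k=1..t. cons (\<omega> k) $ j * X \<omega> k) \<le> (\<Sum>k=1..t. repl (\<omega> k) $ j)"
    by (simp add: sum_subtractf)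
qed

lemma st_causal: "(\<forall>k\<le>t. \<omega> k = \<omega>' k) \<Longrightarrow> st \<omega> t = st \<omega>' t"
  by (induction t) auto

lemma X_causal: "(\<forall>k\<le>t. \<omega> k = \<omega>' k) \<Longrightarrow> X \<omega> t = X \<omega>' t"
  unfolding alg_x_def using st_causal[of "t-1" \<omega> \<omega>'] by auto

end

definition gz :: "('m::finite) sample \<Rightarrow> real^'m \<Rightarrow> real" where
  "gz z q = max 0 (rew z - inner q (cons z)) + inner q (repl z)"

lemma inner_sum_cart: "inner (x::real^'n::finite) y = (\<Sum>j\<in>UNIV. x $ j * y $ j)"
  by (simp add: inner_vec_def)

locale alg_big = alg_ctx rb ab bb bl T mty for rb ab bb bl :: real and T :: nat and mty :: "'m::finite itself" +
  assumes rb: "rb > 0" and ab: "ab > 0" and bb: "bb > 0" and bl: "bl > 0" and T2: "T \<ge> 2"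
begin

definition "Bnd \<omega> \<longleftrightarrow> (\<forall>t\<in>{1..T}. \<bar>rew (\<omega> t)\<bar> < rb \<and> norm (cons (\<omega> t)) < ab \<and>
   (\<forall>j. \<bar>repl (\<omega> t) $ j\<bar> < bb) \<and> (\<forall>j. repl (\<omega> t) $ j \<ge> 0))"

definition "D2 = real CARD('m) * (bb + ab)^2"
definition "Nn \<omega> s = (\<Sum>j\<in>UNIV. (P \<omega> s $ j)^2)"

lemma BndD: assumes "Bnd \<omega>" "t \<in> {1..T}"
  shows "\<bar>rew (\<omega> t)\<bar> < rb" "norm (cons (\<omega> t)) < ab" "\<bar>repl (\<omega> t) $ j\<bar> < bb" "repl (\<omega> t) $ j \<ge> 0"
  using assms unfolding Bnd_def by blast+

lemma eta_pos: "eta > 0"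
proof -
  have "ln (real T) > 0" using T2 by simp
  then show ?thesis unfolding eta_def using T2 by simp
qed

lemma D2_nonneg: "D2 \<ge> 0" unfolding D2_def by simp

lemma Bnd_cons: "Bnd \<omega> \<Longrightarrow> t \<in> {1..T} \<Longrightarrow> \<bar>cons (\<omega> t) $ j\<bar> < ab"
  unfolding Bnd_def using component_le_norm_cart[of "cons (\<omega> t)" j] by force

lemma Bnd_G: "Bnd \<omega> \<Longrightarrow> t \<in> {1..T} \<Longrightarrow> \<bar>G \<omega> t $ j\<bar> \<le> bb + ab"
proof -
  assume B: "Bnd \<omega>" and t: "t \<in> {1..T}"
  have "\<bar>repl (\<omega> t) $ j\<bar> < bb" by (rule BndD[OF B t])
  moreover have "\<bar>cons (\<omega> t) $ j\<bar> < ab" by (rule Bnd_cons[OF B t])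
  moreover have "xv \<omega> t = 0 \<or> xv \<omega> t = 1" unfolding xv_def by auto
  ultimately show ?thesis unfolding G_def by auto
qed

lemma Bnd_G2: "Bnd \<omega> \<Longrightarrow> t \<in> {1..T} \<Longrightarrow> (\<Sum>j\<in>UNIV. (G \<omega> t $ j)^2) \<le> D2"
proof -
  assume B: "Bnd \<omega>" and t: "t \<in> {1..T}"
  have "(\<Sum>j\<in>UNIV. (G \<omega> t $ j)^2) \<le> (\<Sum>j\<in>(UNIV::'m set). (bb + ab)^2)"
  proof (rule sum_mono)
    fix j
    have "\<bar>G \<omega> t $ j\<bar> \<le> bb + ab" by (rule Bnd_G[OF B t])
    then show "(G \<omega> t $ j)^2 \<le> (bb + ab)^2"
      by (metis abs_le_square_iff abs_of_nonneg add_pos_pos ab bb less_imp_le)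
  qed
  then show ?thesis unfolding D2_def by simp
qed

lemma PG_ge: "Bnd \<omega> \<Longrightarrow> t \<in> {1..T} \<Longrightarrow> inner (P \<omega> (t-1)) (G \<omega> t) \<ge> inner (P \<omega> (t-1)) (repl (\<omega> t)) - rb"
proof -
  assume B: "Bnd \<omega>" and t: "t \<in> {1..T}"
  have r: "rew (\<omega> t) < rb" using BndD(1)[OF B t] by linarith
  show ?thesis
  proof (cases "rew (\<omega> t) > inner (P \<omega> (t-1)) (cons (\<omega> t))")
    case True
    then show ?thesis using r unfolding G_def xv_def by (simp add: inner_diff_right)
  next
    case False
    then show ?thesis using rb unfolding G_def xv_def by (simp add: inner_diff_right)
  qed
qed

lemma rew_xv: "rew (\<omega> t) * xv \<omega> t = gz (\<omega> t) (P \<omega> (t-1)) - inner (P \<omega> (t-1)) (G \<omega> t)"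
  unfolding gz_def G_def xv_def by (auto simp: inner_diff_right)

lemma Nn_nonneg: "Nn \<omega> s \<ge> 0" unfolding Nn_def by (simp add: sum_nonneg)

lemma Nn_warm: "s \<le> kn \<Longrightarrow> Nn \<omega> s = 0" unfolding Nn_def by (simp add: P_warm)

lemma Nn_step:
  assumes B: "Bnd \<omega>" and s: "kn < s" "s \<le> T"
  shows "Nn \<omega> s \<le> Nn \<omega> (s-1) - 2 * eta * inner (P \<omega> (s-1)) (G \<omega> s) + eta^2 * D2"
proof -
  obtain s0 where s0: "s = Suc s0" using s by (cases s) auto
  have "Nn \<omega> s \<le> (\<Sum>j\<in>UNIV. (P \<omega> s0 $ j - eta * G \<omega> s $ j)^2)"
    unfolding Nn_def
  proof (rule sum_mono)
    fix j
    have "P \<omega> s $ j = max 0 (P \<omega> s0 $ j - eta * G \<omega> s $ j)"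
      using P_Suc[of s0 \<omega> j] s s0 by simp
    then show "(P \<omega> s $ j)^2 \<le> (P \<omega> s0 $ j - eta * G \<omega> s $ j)^2"
      by (simp add: max_def power2_eq_square)
  qed
  also have "\<dots> = Nn \<omega> s0 - 2 * eta * inner (P \<omega> s0) (G \<omega> s) + eta^2 * (\<Sum>j\<in>UNIV. (G \<omega> s $ j)^2)"
    unfolding Nn_def inner_sum_cart
    by (simp add: power2_diff sum.distrib sum_subtractf sum_distrib_left power_mult_distrib algebra_simps)
  also have "\<dots> \<le> Nn \<omega> s0 - 2 * eta * inner (P \<omega> s0) (G \<omega> s) + eta^2 * D2"
    using Bnd_G2[OF B, of s] s by (simp add: mult_left_mono)
  finally show ?thesis using s0 by simp
qed


lemma Nn_iter:
  assumes B: "Bnd \<omega>" and s': "kn \<le> s'" and ss: "s' \<le> s"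
  shows "s \<le> T \<Longrightarrow> Nn \<omega> s \<le> Nn \<omega> s' - 2 * eta * (\<Sum>t\<in>{s'<..s}. inner (P \<omega> (t-1)) (G \<omega> t))
            + real (s - s') * eta^2 * D2"
  using ss
proof (induction s rule: dec_induct)
  case base then show ?case by simp
next
  case (step n)
  have "Nn \<omega> (Suc n) \<le> Nn \<omega> n - 2 * eta * inner (P \<omega> n) (G \<omega> (Suc n)) + eta^2 * D2"
    using Nn_step[OF B, of "Suc n"] step s' by simp
  moreover have "Nn \<omega> n \<le> Nn \<omega> s' - 2 * eta * (\<Sum>t\<in>{s'<..n}. inner (P \<omega> (t-1)) (G \<omega> t))
            + real (n - s') * eta^2 * D2" using step by simp
  moreover have "{s'<..Suc n} = insert (Suc n) {s'<..n}" using step by auto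
  moreover have "real (Suc n - s') = real (n - s') + 1" using step by simp
  ultimately show ?case by (simp add: algebra_simps)
qed

lemma P_lower_step: "kn < s \<Longrightarrow> P \<omega> s $ j \<ge> P \<omega> (s-1) $ j - eta * G \<omega> s $ j"
proof -
  assume "kn < s"
  then obtain s0 where s0: "s = Suc s0" by (cases s) auto
  then show ?thesis using P_Suc[of s0 \<omega> j] \<open>kn < s\<close> by simp
qed

lemma P_lower_sum:
  assumes "kn \<le> s"
  shows "P \<omega> s $ j \<ge> - eta * (\<Sum>t\<in>{kn<..s}. G \<omega> t $ j)"
  using assms
proof (induction s rule: dec_induct)
  case base then show ?case by (simp add: P_warm)
next
  case (step n)
  have "{kn<..Suc n} = insert (Suc n) {kn<..n}" using step by auto
  then show ?case using step P_lower_step[of "Suc n" \<omega> j] by (simp add: algebra_simps)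
qed

lemma P_lip:
  assumes B: "Bnd \<omega>" and s: "1 \<le> s" "s \<le> T"
  shows "\<bar>P \<omega> s $ j - P \<omega> (s-1) $ j\<bar> \<le> eta * (bb + ab)"
proof -
  obtain s0 where s0: "s = Suc s0" using s by (cases s) auto
  show ?thesis
  proof (cases "s \<le> kn")
    case True
    then show ?thesis using P_warm[of s \<omega>] P_warm[of "s-1" \<omega>] eta_pos ab bb by simp
  next
    case False
    then have e: "P \<omega> s $ j = max 0 (P \<omega> s0 $ j - eta * G \<omega> s $ j)" using P_Suc[of s0 \<omega> j] s0 by simp
    have g: "\<bar>G \<omega> s $ j\<bar> \<le> bb + ab" using Bnd_G[OF B] s by simp
    have "\<bar>eta * G \<omega> s $ j\<bar> \<le> eta * (bb + ab)"
      using g eta_pos by (simp add: abs_mult mult_left_mono)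
    moreover have "P \<omega> s0 $ j \<ge> 0" by (rule P_nonneg)
    ultimately show ?thesis using e s0 by (auto simp: max_def abs_le_iff)
  qed
qed

lemma P_lip_iter:
  assumes B: "Bnd \<omega>" and ss: "s' \<le> s"
  shows "s \<le> T \<Longrightarrow> P \<omega> s' $ j \<ge> P \<omega> s $ j - real (s - s') * eta * (bb + ab)"
  using ss
proof (induction s rule: dec_induct)
  case base then show ?case by simp
next
  case (step n)
  have "\<bar>P \<omega> (Suc n) $ j - P \<omega> n $ j\<bar> \<le> eta * (bb + ab)"
    using P_lip[OF B, of "Suc n" j] step by simp
  moreover have "real (Suc n - s') = real (n - s') + 1" using step by simp
  ultimately show ?case using step by (simp add: algebra_simps abs_le_iff)
qed


definition "Win \<omega> L \<longleftrightarrow> (\<forall>j u. 1 \<le> u \<longrightarrow> u + L \<le> T + 1 \<longrightarrow>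
    (\<Sum>t\<in>{u..<u+L}. repl (\<omega> t) $ j) \<ge> real L * (bl / 2))"
definition "th0 = (rb + eta * D2 / 2) / (bl / 2)"
definition "theta L = th0 + real L * eta * (bb + ab)"
definition "H2 L = max (real CARD('m) * (theta L)^2) (real L * (2 * eta * rb + eta^2 * D2))"

lemma th0_pos: "th0 > 0"
  unfolding th0_def using rb bl eta_pos D2_nonneg by (simp add: add_pos_nonneg)

lemma H2_nonneg: "H2 L \<ge> 0"
  unfolding H2_def by (rule order.trans[OF _ max.cobounded1]) simp

lemma PG_sum_lower:
  assumes B: "Bnd \<omega>" and "kn \<le> s'" "s \<le> T"
  shows "(\<Sum>t\<in>{s'<..s}. inner (P \<omega> (t-1)) (G \<omega> t)) \<ge> (\<Sum>t\<in>{s'<..s}. inner (P \<omega> (t-1)) (repl (\<omega> t)) - rb)"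
  by (rule sum_mono, rule PG_ge[OF B]) (use assms in auto)

lemma Pb_nonneg:
  assumes B: "Bnd \<omega>" and "t \<in> {1..T}"
  shows "inner (P \<omega> s) (repl (\<omega> t)) \<ge> P \<omega> s $ j * repl (\<omega> t) $ j" "P \<omega> s $ j * repl (\<omega> t) $ j \<ge> 0"
proof -
  have nn: "\<And>i. P \<omega> s $ i * repl (\<omega> t) $ i \<ge> 0"
    using P_nonneg BndD(4)[OF B assms(2)] by (simp add: mult_nonneg_nonneg)
  show "inner (P \<omega> s) (repl (\<omega> t)) \<ge> P \<omega> s $ j * repl (\<omega> t) $ j"
    unfolding inner_sum_cart by (rule member_le_sum) (use nn in auto)
  show "P \<omega> s $ j * repl (\<omega> t) $ j \<ge> 0" by (rule nn)
qed

end


context alg_big begin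

lemma Nn_bound:
  assumes B: "Bnd \<omega>" and L: "L \<ge> 1" and W: "Win \<omega> L"
  shows "s \<le> T \<Longrightarrow> Nn \<omega> s \<le> H2 L"
proof (induction s rule: less_induct)
  case (less s)
  have c1: "bb + ab > 0" using ab bb by simp
  consider "s \<le> kn" | "kn < s" "s < kn + L" | "kn + L \<le> s" by linarith
  then show ?case
  proof cases
    case 1 then show ?thesis using Nn_warm H2_nonneg by simp
  next
    case 2
    have a1: "Nn \<omega> s \<le> Nn \<omega> kn - 2 * eta * (\<Sum>t\<in>{kn<..s}. inner (P \<omega> (t-1)) (G \<omega> t))
            + real (s - kn) * eta^2 * D2" using Nn_iter[OF B, of kn s] 2 less by simp
    have a2: "(\<Sum>t\<in>{kn<..s}. inner (P \<omega> (t-1)) (G \<omega> t)) \<ge> (\<Sum>t\<in>{kn<..s}. - rb)"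
    proof (rule sum_mono)
      fix t assume t: "t \<in> {kn<..s}"
      then have t1: "t \<in> {1..T}" using less by auto
      have "inner (P \<omega> (t-1)) (repl (\<omega> t)) \<ge> 0"
        unfolding inner_sum_cart using P_nonneg BndD(4)[OF B t1] by (simp add: sum_nonneg)
      then show "- rb \<le> inner (P \<omega> (t-1)) (G \<omega> t)" using PG_ge[OF B t1] by simp
    qed
    have "2 * eta * (\<Sum>t\<in>{kn<..s}. inner (P \<omega> (t-1)) (G \<omega> t)) \<ge> 2 * eta * (\<Sum>t\<in>{kn<..s}. - rb)"
      using a2 eta_pos by (intro mult_left_mono) auto
    moreover have "2 * eta * (\<Sum>t\<in>{kn<..s}. - rb) = - (2 * eta * (real (s - kn) * rb))" by simp
    moreover have "real (s - kn) * (2 * eta * rb + eta^2 * D2) = 2 * eta * (real (s - kn) * rb) + real (s - kn) * eta^2 * D2"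
      by (simp add: algebra_simps)
    moreover have "Nn \<omega> kn = 0" by (rule Nn_warm) simp
    ultimately have "Nn \<omega> s \<le> real (s - kn) * (2 * eta * rb + eta^2 * D2)"
      using a1 by linarith
    also have "\<dots> \<le> real L * (2 * eta * rb + eta^2 * D2)"
      using 2 eta_pos rb D2_nonneg by (intro mult_right_mono) auto
    also have "\<dots> \<le> H2 L" unfolding H2_def by simp
    finally show ?thesis .
  next
    case 3
    show ?thesis
    proof (cases "\<forall>j. P \<omega> s $ j \<le> theta L")
      case True
      have "Nn \<omega> s \<le> (\<Sum>j\<in>(UNIV::'m set). (theta L)^2)"
        unfolding Nn_def
      proof (rule sum_mono)
        fix j show "(P \<omega> s $ j)^2 \<le> (theta L)^2"
          using True P_nonneg by (intro power_mono) auto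
      qed
      also have "\<dots> \<le> H2 L" unfolding H2_def by simp
      finally show ?thesis .
    next
      case False
      then obtain j where j: "P \<omega> s $ j > theta L" by (auto simp: not_le)
      define s' where "s' = s - L"
      have s's: "s' < s" "kn \<le> s'" using 3 L unfolding s'_def by auto
      have iter: "Nn \<omega> s \<le> Nn \<omega> s' - 2 * eta * (\<Sum>t\<in>{s'<..s}. inner (P \<omega> (t-1)) (G \<omega> t))
            + real (s - s') * eta^2 * D2" using Nn_iter[OF B, of s' s] s's less by simp
      have ss: "real (s - s') = real L" using 3 unfolding s'_def by simp
      have win: "(\<Sum>t\<in>{s'<..s}. repl (\<omega> t) $ j) \<ge> real L * (bl / 2)"
      proof -
        have e: "{s'<..s} = {s'+1..<(s'+1)+L}" using 3 unfolding s'_def by auto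
        have "1 \<le> s'+1" "(s'+1) + L \<le> T + 1" using 3 less unfolding s'_def by auto
        then have "(\<Sum>t\<in>{s'+1..<(s'+1)+L}. repl (\<omega> t) $ j) \<ge> real L * (bl / 2)"
          using W unfolding Win_def by blast
        then show ?thesis unfolding e .
      qed
      have "(\<Sum>t\<in>{s'<..s}. inner (P \<omega> (t-1)) (G \<omega> t)) \<ge> (\<Sum>t\<in>{s'<..s}. th0 * repl (\<omega> t) $ j - rb)"
      proof (rule sum_mono)
        fix t assume t: "t \<in> {s'<..s}"
        then have t1: "t \<in> {1..T}" using less s's by auto
        have "t - 1 \<le> s" using t by auto
        have "P \<omega> (t-1) $ j \<ge> P \<omega> s $ j - real (s - (t-1)) * eta * (bb + ab)"
          by (rule P_lip_iter[OF B \<open>t - 1 \<le> s\<close> \<open>s \<le> T\<close>])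
        moreover have "real (s - (t-1)) \<le> real L" using t unfolding s'_def by auto
        moreover have "real (s - (t-1)) * (eta * (bb + ab)) \<le> real L * (eta * (bb + ab))"
          using \<open>real (s - (t-1)) \<le> real L\<close> eta_pos c1 by (intro mult_right_mono) auto
        ultimately have "P \<omega> (t-1) $ j \<ge> theta L - real L * eta * (bb + ab)"
          using j by (simp add: mult.assoc)
        then have pj: "P \<omega> (t-1) $ j \<ge> th0" unfolding theta_def by simp
        have "th0 * repl (\<omega> t) $ j \<le> P \<omega> (t-1) $ j * repl (\<omega> t) $ j"
          using pj BndD(4)[OF B t1] by (simp add: mult_right_mono)
        also have "\<dots> \<le> inner (P \<omega> (t-1)) (repl (\<omega> t))" by (rule Pb_nonneg(1)[OF B t1])
        finally show "th0 * repl (\<omega> t) $ j - rb \<le> inner (P \<omega> (t-1)) (G \<omega> t)"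
          using PG_ge[OF B t1] by simp
      qed
      also have "(\<Sum>t\<in>{s'<..s}. th0 * repl (\<omega> t) $ j - rb) = th0 * (\<Sum>t\<in>{s'<..s}. repl (\<omega> t) $ j) - real L * rb"
        using ss by (simp add: sum_subtractf sum_distrib_left)
      finally have f1: "(\<Sum>t\<in>{s'<..s}. inner (P \<omega> (t-1)) (G \<omega> t)) \<ge> th0 * (\<Sum>t\<in>{s'<..s}. repl (\<omega> t) $ j) - real L * rb" .
      have "th0 * (\<Sum>t\<in>{s'<..s}. repl (\<omega> t) $ j) \<ge> th0 * (real L * (bl / 2))"
        using win th0_pos by (intro mult_left_mono) auto
      with f1 have "(\<Sum>t\<in>{s'<..s}. inner (P \<omega> (t-1)) (G \<omega> t)) \<ge> th0 * (real L * (bl / 2)) - real L * rb"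
        by linarith
      also have "th0 * (real L * (bl / 2)) - real L * rb = real L * eta * D2 / 2"
        unfolding th0_def using bl by (simp add: field_simps)
      finally have "2 * eta * (\<Sum>t\<in>{s'<..s}. inner (P \<omega> (t-1)) (G \<omega> t)) \<ge> 2 * eta * (real L * eta * D2 / 2)"
        using eta_pos by (intro mult_left_mono) auto
      moreover have "2 * eta * (real L * eta * D2 / 2) = real (s - s') * eta^2 * D2"
        using ss by (simp add: power2_eq_square)
      ultimately have "Nn \<omega> s \<le> Nn \<omega> s'"
        using iter by linarith
      also have "\<dots> \<le> H2 L" using less s's by simp
      finally show ?thesis .
    qed
  qed
qed


lemma P_le_sqrtNn: "P \<omega> s $ j \<le> sqrt (Nn \<omega> s)"
proof -
  have "(P \<omega> s $ j)^2 \<le> Nn \<omega> s" unfolding Nn_def by (rule member_le_sum) auto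
  then show ?thesis by (simp add: real_le_rsqrt)
qed

lemma X_warm: "t \<le> kn \<Longrightarrow> 1 \<le> t \<Longrightarrow> X \<omega> t = 0"
  by (cases t) (auto simp: X_Suc)

lemma good:
  assumes B: "Bnd \<omega>" and L: "L \<ge> 1" and W: "Win \<omega> L"
    and K: "\<forall>j. (\<Sum>t\<in>{1..kn}. repl (\<omega> t) $ j) \<ge> real kn * (bl / 2)"
    and C: "real kn * (bl / 2) \<ge> sqrt (H2 L) / eta + ab"
  shows "t \<in> {kn<..T} \<Longrightarrow> X \<omega> t = xv \<omega> t"
proof (induction t rule: less_induct)
  case (less t)
  obtain t0 where t0: "t = Suc t0" using less by (cases t) auto
  have t0k: "kn \<le> t0" "t0 < T" using less t0 by auto
  have inv: "Lv \<omega> t0 $ j \<ge> ab" for j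
  proof -
    have split: "{1..t0} = {1..kn} \<union> {kn<..t0}" using t0k by auto
    have "Lv \<omega> t0 $ j = (\<Sum>k=1..t0. repl (\<omega> k) $ j - X \<omega> k * cons (\<omega> k) $ j)"
      unfolding Lv_sum by (simp add: sum_component)
    also have "\<dots> = (\<Sum>k\<in>{1..kn}. repl (\<omega> k) $ j - X \<omega> k * cons (\<omega> k) $ j)
        + (\<Sum>k\<in>{kn<..t0}. repl (\<omega> k) $ j - X \<omega> k * cons (\<omega> k) $ j)"
      unfolding split by (rule sum.union_disjoint) auto
    also have "(\<Sum>k\<in>{1..kn}. repl (\<omega> k) $ j - X \<omega> k * cons (\<omega> k) $ j) = (\<Sum>k\<in>{1..kn}. repl (\<omega> k) $ j)"
      by (rule sum.cong) (auto simp: X_warm)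
    also have "(\<Sum>k\<in>{kn<..t0}. repl (\<omega> k) $ j - X \<omega> k * cons (\<omega> k) $ j) = (\<Sum>k\<in>{kn<..t0}. G \<omega> k $ j)"
    proof (rule sum.cong)
      fix k assume k: "k \<in> {kn<..t0}"
      then have "X \<omega> k = xv \<omega> k" using less t0 by auto
      then show "repl (\<omega> k) $ j - X \<omega> k * cons (\<omega> k) $ j = G \<omega> k $ j" unfolding G_def by simp
    qed simp
    finally have lv: "Lv \<omega> t0 $ j = (\<Sum>k\<in>{1..kn}. repl (\<omega> k) $ j) + (\<Sum>k\<in>{kn<..t0}. G \<omega> k $ j)" .
    have "P \<omega> t0 $ j \<ge> - eta * (\<Sum>k\<in>{kn<..t0}. G \<omega> k $ j)" by (rule P_lower_sum) (rule t0k)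
    moreover have "P \<omega> t0 $ j \<le> sqrt (H2 L)"
      using P_le_sqrtNn[where \<omega>=\<omega> and s=t0 and j=j] Nn_bound[OF B L W, of t0] t0k by (meson less_imp_le order.trans real_sqrt_le_mono)
    ultimately have "- eta * (\<Sum>k\<in>{kn<..t0}. G \<omega> k $ j) \<le> sqrt (H2 L)" by linarith
    then have "(\<Sum>k\<in>{kn<..t0}. G \<omega> k $ j) \<ge> - (sqrt (H2 L) / eta)"
      using eta_pos by (simp add: field_simps)
    moreover have "real kn * (bl / 2) \<le> (\<Sum>t = 1..kn. repl (\<omega> t) $ j)" using K by blast
    ultimately show ?thesis using lv C by linarith
  qed
  have t1: "t \<in> {1..T}" using less by auto
  have "\<forall>j. Lv \<omega> t0 $ j \<ge> cons (\<omega> (Suc t0)) $ j"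
    using inv Bnd_cons[OF B t1] t0 by (smt (verit))
  then show ?case unfolding t0 X_Suc xv_def using t0k by simp
qed

end


context alg_big begin

definition "HS \<omega> = {(\<Sum>k\<in>S. rew (\<omega> k)) | S. S \<subseteq> {1..T} \<and>
       prefix_feasible T \<omega> (\<lambda>k. if k \<in> S then 1 else 0)}"

lemma HS_fin: "finite (HS \<omega>)"
proof -
  have "HS \<omega> \<subseteq> (\<lambda>S. \<Sum>k\<in>S. rew (\<omega> k)) ` Pow {1..T}" unfolding HS_def by auto
  then show ?thesis by (rule finite_subset) auto
qed

lemma HS_empty: "Bnd \<omega> \<Longrightarrow> 0 \<in> HS \<omega>"
proof -
  assume B: "Bnd \<omega>"
  have "prefix_feasible T \<omega> (\<lambda>k. if k \<in> {} then 1 else 0)"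
    unfolding prefix_feasible_def
  proof (intro allI ballI)
    fix j t assume t: "t \<in> {1..T}"
    have "(\<Sum>k = 1..t. repl (\<omega> k) $ j) \<ge> 0"
      by (rule sum_nonneg) (use t BndD(4)[OF B] in auto)
    then show "(\<Sum>k = 1..t. cons (\<omega> k) $ j * (if k \<in> {} then 1 else 0)) \<le> (\<Sum>k = 1..t. repl (\<omega> k) $ j)"
      by simp
  qed
  then show ?thesis unfolding HS_def by force
qed

lemma hind_eq: "hindsight_opt T \<omega> = Max (HS \<omega>)"
  unfolding hindsight_opt_def HS_def ..

lemma HS_upper:
  assumes B: "Bnd \<omega>" and q: "\<forall>j. q $ j \<ge> 0" and v: "v \<in> HS \<omega>"
  shows "v \<le> (\<Sum>t=1..T. gz (\<omega> t) q)"
proof -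
  obtain S where S: "v = (\<Sum>k\<in>S. rew (\<omega> k))" "S \<subseteq> {1..T}"
    and F: "prefix_feasible T \<omega> (\<lambda>k. if k \<in> S then 1 else 0)"
    using v unfolding HS_def by blast
  have fS: "finite S" using S(2) finite_subset by blast
  have capj: "(\<Sum>k\<in>S. cons (\<omega> k) $ j) \<le> (\<Sum>k=1..T. repl (\<omega> k) $ j)" for j
  proof (cases "T = 0")
    case True then show ?thesis using S(2) by simp
  next
    case False
    then have "(\<Sum>k=1..T. cons (\<omega> k) $ j * (if k \<in> S then 1 else 0)) \<le> (\<Sum>k=1..T. repl (\<omega> k) $ j)"
      using F unfolding prefix_feasible_def by auto
    moreover have "(\<Sum>k=1..T. cons (\<omega> k) $ j * (if k \<in> S then 1 else 0)) = (\<Sum>k\<in>S. cons (\<omega> k) $ j)"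
    proof -
      have "(\<Sum>k=1..T. cons (\<omega> k) $ j * (if k \<in> S then 1 else 0)) = (\<Sum>k\<in>{1..T}. if k \<in> S then cons (\<omega> k) $ j else 0)"
        by (rule sum.cong) auto
      also have "\<dots> = (\<Sum>k\<in>{1..T} \<inter> S. cons (\<omega> k) $ j)" by (rule sum.inter_restrict[symmetric]) simp
      also have "{1..T} \<inter> S = S" using S(2) by auto
      finally show ?thesis .
    qed
    ultimately show ?thesis by simp
  qed
  have "v = (\<Sum>k\<in>S. rew (\<omega> k) - inner q (cons (\<omega> k))) + inner q (\<Sum>k\<in>S. cons (\<omega> k))"
    unfolding S(1) by (simp add: sum_subtractf inner_sum_right)
  also have "(\<Sum>k\<in>S. rew (\<omega> k) - inner q (cons (\<omega> k))) \<le> (\<Sum>k\<in>S. max 0 (rew (\<omega> k) - inner q (cons (\<omega> k))))"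
    by (rule sum_mono) simp
  also have "\<dots> \<le> (\<Sum>k=1..T. max 0 (rew (\<omega> k) - inner q (cons (\<omega> k))))"
    by (rule sum_mono2) (use S(2) in auto)
  also have "inner q (\<Sum>k\<in>S. cons (\<omega> k)) \<le> inner q (\<Sum>k=1..T. repl (\<omega> k))"
    unfolding inner_sum_cart
    by (rule sum_mono) (use q capj in \<open>auto simp: sum_component intro!: mult_left_mono\<close>)
  finally show ?thesis unfolding gz_def by (simp add: sum.distrib inner_sum_right)
qed

lemma hind_upper:
  assumes B: "Bnd \<omega>" and q: "\<forall>j. q $ j \<ge> 0"
  shows "hindsight_opt T \<omega> \<le> (\<Sum>t=1..T. gz (\<omega> t) q)"
proof -
  have "Max (HS \<omega>) \<in> HS \<omega>" using HS_fin HS_empty[OF B] by (intro Max_in) auto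
  then show ?thesis unfolding hind_eq by (rule HS_upper[OF B q])
qed

lemma HS_abs: fixes \<omega> :: "nat \<Rightarrow> 'm sample" shows "Bnd \<omega> \<Longrightarrow> v \<in> HS \<omega> \<Longrightarrow> \<bar>v\<bar> \<le> real T * rb"
proof -
  assume B: "Bnd \<omega>" and v: "v \<in> HS \<omega>"
  obtain S where S: "v = (\<Sum>k\<in>S. rew (\<omega> k))" "S \<subseteq> {1..T}"
    using v unfolding HS_def by blast
  have "\<bar>v\<bar> \<le> (\<Sum>k\<in>S. \<bar>rew (\<omega> k)\<bar>)" unfolding S(1) by (rule sum_abs)
  also have "\<dots> \<le> (\<Sum>k\<in>{1..T}. \<bar>rew (\<omega> k)\<bar>)" by (rule sum_mono2) (use S(2) in auto)
  also have "\<dots> \<le> (\<Sum>k\<in>{1..T}. rb)" by (rule sum_mono) (use BndD(1)[OF B] in \<open>auto intro: less_imp_le\<close>)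
  finally show ?thesis by simp
qed

lemma hind_abs: fixes \<omega> :: "nat \<Rightarrow> 'm sample" shows "Bnd \<omega> \<Longrightarrow> \<bar>hindsight_opt T \<omega>\<bar> \<le> real T * rb"
  unfolding hind_eq using HS_fin HS_empty by (auto intro!: HS_abs Max_in)

lemma reward_abs: fixes \<omega> :: "nat \<Rightarrow> 'm sample" shows "Bnd \<omega> \<Longrightarrow> \<bar>alg_reward rb ab bb bl 9 T \<omega>\<bar> \<le> real T * rb"
proof -
  assume B: "Bnd \<omega>"
  have "\<bar>alg_reward rb ab bb bl 9 T \<omega>\<bar> \<le> (\<Sum>t=1..T. \<bar>rew (\<omega> t) * X \<omega> t\<bar>)"
    unfolding alg_reward_def by (rule sum_abs)
  also have "\<dots> \<le> (\<Sum>t\<in>{1..T}. rb)"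
  proof (rule sum_mono)
    fix t assume t: "t \<in> {1..T}"
    have "X \<omega> t = 0 \<or> X \<omega> t = 1" using X01 by blast
    then show "\<bar>rew (\<omega> t) * X \<omega> t\<bar> \<le> rb" using BndD(1)[OF B t] by auto
  qed
  finally show ?thesis by simp
qed

lemma X_le_xv: "kn < t \<Longrightarrow> X \<omega> t \<le> xv \<omega> t"
  by (cases t) (auto simp: X_Suc xv_def)

lemma reward_lower:
  assumes B: "Bnd \<omega>"
  shows "alg_reward rb ab bb bl 9 T \<omega> \<ge> (\<Sum>t\<in>{kn<..T}. gz (\<omega> t) (P \<omega> (t-1)))
      - real (T - kn) * eta * D2 / 2
      - (if (\<forall>t\<in>{kn<..T}. X \<omega> t = xv \<omega> t) then 0 else real T * rb)"
proof -
  have "alg_reward rb ab bb bl 9 T \<omega> = (\<Sum>t\<in>{1..T}. rew (\<omega> t) * X \<omega> t)"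
    unfolding alg_reward_def by simp
  also have "\<dots> = (\<Sum>t\<in>{kn<..T}. rew (\<omega> t) * X \<omega> t)"
  proof (rule sum.mono_neutral_right)
    show "{kn<..T} \<subseteq> {1..T}" by auto
    show "\<forall>i\<in>{1..T} - {kn<..T}. rew (\<omega> i) * X \<omega> i = 0" by (auto simp: X_warm)
  qed simp
  finally have ar: "alg_reward rb ab bb bl 9 T \<omega> = (\<Sum>t\<in>{kn<..T}. rew (\<omega> t) * X \<omega> t)" .
  have sx: "(\<Sum>t\<in>{kn<..T}. rew (\<omega> t) * xv \<omega> t) \<ge> (\<Sum>t\<in>{kn<..T}. gz (\<omega> t) (P \<omega> (t-1))) - real (T - kn) * eta * D2 / 2"
  proof (cases "kn \<le> T")
    case True
    have "Nn \<omega> T \<le> Nn \<omega> kn - 2 * eta * (\<Sum>t\<in>{kn<..T}. inner (P \<omega> (t-1)) (G \<omega> t)) + real (T - kn) * eta^2 * D2"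
      by (rule Nn_iter[OF B order.refl True order.refl])
    then have "2 * eta * (\<Sum>t\<in>{kn<..T}. inner (P \<omega> (t-1)) (G \<omega> t)) \<le> 2 * eta * (real (T - kn) * eta * D2 / 2)"
      using Nn_nonneg[of \<omega> T] Nn_warm[of kn \<omega>] by (simp add: power2_eq_square algebra_simps)
    then have "(\<Sum>t\<in>{kn<..T}. inner (P \<omega> (t-1)) (G \<omega> t)) \<le> real (T - kn) * eta * D2 / 2"
      using eta_pos mult_le_cancel_left_pos[of "2 * eta"] by simp
    then show ?thesis unfolding rew_xv by (simp add: sum_subtractf)
  next
    case False then show ?thesis by simp
  qed
  show ?thesis
  proof (cases "\<forall>t\<in>{kn<..T}. X \<omega> t = xv \<omega> t")
    case True
    then have "(\<Sum>t\<in>{kn<..T}. rew (\<omega> t) * X \<omega> t) = (\<Sum>t\<in>{kn<..T}. rew (\<omega> t) * xv \<omega> t)" by simp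
    then show ?thesis using ar sx True by simp
  next
    case False
    have "(\<Sum>t\<in>{kn<..T}. rew (\<omega> t) * X \<omega> t) \<ge> (\<Sum>t\<in>{kn<..T}. rew (\<omega> t) * xv \<omega> t - rb)"
    proof (rule sum_mono)
      fix t assume t: "t \<in> {kn<..T}"
      then have t1: "t \<in> {1..T}" by auto
      have "X \<omega> t \<le> xv \<omega> t" using t X_le_xv by auto
      moreover have "X \<omega> t = 0 \<or> X \<omega> t = 1" using X01 by blast
      moreover have "xv \<omega> t = 0 \<or> xv \<omega> t = 1" unfolding xv_def by auto
      ultimately show "rew (\<omega> t) * xv \<omega> t - rb \<le> rew (\<omega> t) * X \<omega> t"
        using BndD(1)[OF B t1] by auto
    qed
    moreover have "(\<Sum>t\<in>{kn<..T}. rew (\<omega> t) * xv \<omega> t - rb) \<ge> (\<Sum>t\<in>{kn<..T}. rew (\<omega> t) * xv \<omega> t) - real T * rb"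
      using rb by (simp add: sum_subtractf)
    ultimately show ?thesis using ar sx False by simp
  qed
qed

end


lemma Max_if_eq:
  fixes f :: "'a \<Rightarrow> real"
  assumes A: "finite A" and BA: "B \<subseteq> A" and Bne: "B \<noteq> {}" and c: "\<forall>S\<in>A. c < f S"
  shows "Max (f ` B) = Max ((\<lambda>S. if S \<in> B then f S else c) ` A)"
proof -
  have fB: "finite B" using A BA finite_subset by blast
  show ?thesis
  proof (rule antisym)
    have "Max (f ` B) \<in> f ` B" by (rule Max_in) (use fB Bne in auto)
    then obtain S where S: "S \<in> B" "f S = Max (f ` B)" by auto
    have "(\<lambda>S. if S \<in> B then f S else c) S \<in> (\<lambda>S. if S \<in> B then f S else c) ` A"
      using S BA by blast
    then have "(\<lambda>S. if S \<in> B then f S else c) S \<le> Max ((\<lambda>S. if S \<in> B then f S else c) ` A)"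
      using A by (intro Max_ge) auto
    then have "f S \<le> Max ((\<lambda>S. if S \<in> B then f S else c) ` A)" using S by simp
    then show "Max (f ` B) \<le> Max ((\<lambda>S. if S \<in> B then f S else c) ` A)" using S by simp
  next
    show "Max ((\<lambda>S. if S \<in> B then f S else c) ` A) \<le> Max (f ` B)"
    proof (subst Max_le_iff)
      show "finite ((\<lambda>S. if S \<in> B then f S else c) ` A)" using A by simp
      show "(\<lambda>S. if S \<in> B then f S else c) ` A \<noteq> {}" using Bne BA by auto
      show "\<forall>a\<in>(\<lambda>S. if S \<in> B then f S else c) ` A. a \<le> Max (f ` B)"
      proof
        fix a assume "a \<in> (\<lambda>S. if S \<in> B then f S else c) ` A"
        then obtain S where S: "S \<in> A" "a = (if S \<in> B then f S else c)" by auto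
        obtain S0 where S0: "S0 \<in> B" using Bne by auto
        have m0: "f S0 \<le> Max (f ` B)" using fB S0 by (intro Max_ge) auto
        show "a \<le> Max (f ` B)"
        proof (cases "S \<in> B")
          case True then show ?thesis using S fB by (auto intro!: Max_ge)
        next
          case False then show ?thesis using S c S0 BA m0 by force
        qed
      qed
    qed
  qed
qed

locale prob_big = alg_big rb ab bb bl T mty for rb ab bb bl :: real and T :: nat and mty :: "'m::finite itself" +
  fixes M :: "'m sample measure"
  assumes bd: "bounded_dist M rb ab bb bl"
begin

abbreviation Om :: "(nat \<Rightarrow> 'm sample) measure" where "Om \<equiv> PiM UNIV (\<lambda>_. M)"

lemma M_prob: "prob_space M" using bd unfolding bounded_dist_def by blast
lemma sets_M: "sets M = sets borel" using bd unfolding bounded_dist_def by blast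
lemma AE_M: "AE z in M. \<bar>rew z\<bar> < rb \<and> norm (cons z) < ab \<and> (\<forall>j. \<bar>repl z $ j\<bar> < bb) \<and> (\<forall>j. repl z $ j \<ge> 0)"
  using bd unfolding bounded_dist_def by blast
lemma Eb: "(\<integral>z. repl z $ j \<partial>M) > bl" using bd unfolding bounded_dist_def by blast

sublocale M: prob_space M by (rule M_prob)
sublocale PS: product_prob_space "\<lambda>_::nat. M" UNIV
  by (simp add: product_prob_space_def product_sigma_finite_def M.sigma_finite_measure_axioms
      product_prob_space_axioms_def M_prob)

lemma Om_prob: "prob_space Om" by (rule prob_space_PiM) (rule M_prob)

lemma meas_M_borel: "measurable N M = measurable N borel"
  by (rule measurable_cong_sets) (auto simp: sets_M)

lemma borel_M_meas: "measurable M N = measurable borel N"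
  by (rule measurable_cong_sets) (auto simp: sets_M)

lemma meas_coord[measurable]: "(\<lambda>\<omega>. \<omega> t) \<in> borel_measurable Om"
proof -
  have "(\<lambda>\<omega>. \<omega> t) \<in> measurable Om M" by simp
  then show ?thesis unfolding meas_M_borel .
qed

lemma meas_st[measurable]: "(\<lambda>\<omega>. st \<omega> t) \<in> borel_measurable Om"
proof (induction t)
  case 0 then show ?case by simp
next
  case (Suc t)
  note Suc[measurable]
  show ?case by simp measurable
qed

lemma meas_X[measurable]: "(\<lambda>\<omega>. X \<omega> t) \<in> borel_measurable Om"
  unfolding alg_x_def by measurable

lemma meas_reward[measurable]: "(\<lambda>\<omega>. alg_reward rb ab bb bl 9 T \<omega>) \<in> borel_measurable Om"
  unfolding alg_reward_def by measurable

lemma AE_Bnd: "AE \<omega> in Om. Bnd \<omega>"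
proof -
  have "AE \<omega> in Om. \<forall>t\<in>{1..T}. \<bar>rew (\<omega> t)\<bar> < rb \<and> norm (cons (\<omega> t)) < ab \<and> (\<forall>j. \<bar>repl (\<omega> t) $ j\<bar> < bb) \<and> (\<forall>j. repl (\<omega> t) $ j \<ge> 0)"
    by (intro AE_finite_allI finite_atLeastAtMost AE_PiM_component[OF M_prob] AE_M) auto
  then show ?thesis unfolding Bnd_def .
qed


definition "feas \<omega> S \<longleftrightarrow> prefix_feasible T \<omega> (\<lambda>k. if k \<in> S then 1 else (0::real))"

lemma meas_feas[measurable]: "Measurable.pred Om (\<lambda>\<omega>. feas \<omega> S)"
proof -
  have m1[measurable]: "(\<lambda>\<omega>. \<Sum>k = 1..t. cons (\<omega> k) $ j * (if k \<in> S then 1 else (0::real))) \<in> borel_measurable Om" for j t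
    by measurable
  have m2[measurable]: "(\<lambda>\<omega>. \<Sum>k = 1..t. repl (\<omega> k) $ j) \<in> borel_measurable Om" for j t
    by measurable
  have m3[measurable]: "Measurable.pred Om (\<lambda>\<omega>. (\<Sum>k = 1..t. cons (\<omega> k) $ j * (if k \<in> S then 1 else (0::real))) \<le> (\<Sum>k = 1..t. repl (\<omega> k) $ j))" for j t
    unfolding Measurable.pred_def by (rule borel_measurable_le[OF m1 m2])
  show ?thesis unfolding feas_def prefix_feasible_def by measurable
qed

lemma hind_repr:
  "hindsight_opt T \<omega> = (if \<exists>S\<in>Pow {1..T}. feas \<omega> S
     then Max ((\<lambda>S. if feas \<omega> S then (\<Sum>k\<in>S. rew (\<omega> k)) else - (\<Sum>k\<in>{1..T}. \<bar>rew (\<omega> k)\<bar>) - 1) ` Pow {1..T})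
     else Max {})"
proof -
  define B where "B = {S \<in> Pow {1..T}. feas \<omega> S}"
  have HS: "HS \<omega> = (\<lambda>S. \<Sum>k\<in>S. rew (\<omega> k)) ` B" unfolding HS_def B_def feas_def by auto
  show ?thesis
  proof (cases "\<exists>S\<in>Pow {1..T}. feas \<omega> S")
    case True
    then have Bne: "B \<noteq> {}" unfolding B_def by auto
    have c: "\<forall>S\<in>Pow {1..T}. - (\<Sum>k\<in>{1..T}. \<bar>rew (\<omega> k)\<bar>) - 1 < (\<Sum>k\<in>S. rew (\<omega> k))"
    proof
      fix S assume S: "S \<in> Pow {1..T}"
      have "- (\<Sum>k\<in>S. rew (\<omega> k)) \<le> (\<Sum>k\<in>S. \<bar>rew (\<omega> k)\<bar>)"
        by (metis abs_ge_minus_self order.trans sum_abs)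
      also have "\<dots> \<le> (\<Sum>k\<in>{1..T}. \<bar>rew (\<omega> k)\<bar>)" by (rule sum_mono2) (use S in auto)
      finally show "- (\<Sum>k\<in>{1..T}. \<bar>rew (\<omega> k)\<bar>) - 1 < (\<Sum>k\<in>S. rew (\<omega> k))" by simp
    qed
    have "Max ((\<lambda>S. \<Sum>k\<in>S. rew (\<omega> k)) ` B) = Max ((\<lambda>S. if S \<in> B then (\<Sum>k\<in>S. rew (\<omega> k)) else - (\<Sum>k\<in>{1..T}. \<bar>rew (\<omega> k)\<bar>) - 1) ` Pow {1..T})"
      by (rule Max_if_eq) (use Bne c in \<open>auto simp: B_def\<close>)
    also have "(\<lambda>S. if S \<in> B then (\<Sum>k\<in>S. rew (\<omega> k)) else - (\<Sum>k\<in>{1..T}. \<bar>rew (\<omega> k)\<bar>) - 1) ` Pow {1..T}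
      = (\<lambda>S. if feas \<omega> S then (\<Sum>k\<in>S. rew (\<omega> k)) else - (\<Sum>k\<in>{1..T}. \<bar>rew (\<omega> k)\<bar>) - 1) ` Pow {1..T}"
      by (rule image_cong) (auto simp: B_def)
    finally show ?thesis using True unfolding hind_eq HS by simp
  next
    case False
    then have "B = {}" unfolding B_def by auto
    then show ?thesis using False unfolding hind_eq HS by simp
  qed
qed

lemma meas_hind[measurable]: "(\<lambda>\<omega>. hindsight_opt T \<omega>) \<in> borel_measurable Om"
  unfolding hind_repr by measurable

lemma int_hind: "integrable Om (\<lambda>\<omega>. hindsight_opt T \<omega>)"
  by (rule PS.integrable_const_bound[where B="real T * rb"]) (use AE_Bnd hind_abs in \<open>auto elim!: eventually_mono\<close>)

lemma int_reward: "integrable Om (\<lambda>\<omega>. alg_reward rb ab bb bl 9 T \<omega>)"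
  by (rule PS.integrable_const_bound[where B="real T * rb"]) (use AE_Bnd reward_abs in \<open>auto elim!: eventually_mono\<close>)

end


lemma mgz[measurable (raw)]:
  assumes [measurable]: "f \<in> borel_measurable N" "g \<in> borel_measurable N"
  shows "(\<lambda>x. gz (f x) (g x :: real^'m::finite)) \<in> borel_measurable N"
  unfolding gz_def by measurable

lemma abs_inner_le: "\<bar>inner (q::real^'m::finite) a\<bar> \<le> (\<Sum>j\<in>UNIV. \<bar>q $ j\<bar>) * c" if "\<forall>j. \<bar>a $ j\<bar> \<le> c" for c
proof -
  have "\<bar>inner q a\<bar> \<le> (\<Sum>j\<in>UNIV. \<bar>q $ j * a $ j\<bar>)" unfolding inner_sum_cart by (rule sum_abs)
  also have "\<dots> \<le> (\<Sum>j\<in>UNIV. \<bar>q $ j\<bar> * c)"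
    by (rule sum_mono) (use that in \<open>auto simp: abs_mult intro: mult_left_mono\<close>)
  finally show ?thesis by (simp add: sum_distrib_right)
qed

lemma gz_bound:
  assumes "\<bar>rew z\<bar> < rb" "norm (cons z) < ab" "\<forall>j. \<bar>repl z $ j\<bar> < bb"
  shows "\<bar>gz z q\<bar> \<le> rb + (\<Sum>j\<in>UNIV. \<bar>q $ j\<bar>) * (ab + bb)"
proof -
  have "\<bar>cons z $ j\<bar> \<le> ab" for j
    using assms(2) component_le_norm_cart[of "cons z" j] by linarith
  then have a: "\<bar>inner q (cons z)\<bar> \<le> (\<Sum>j\<in>UNIV. \<bar>q $ j\<bar>) * ab"
    by (intro abs_inner_le) auto
  have b: "\<bar>inner q (repl z)\<bar> \<le> (\<Sum>j\<in>UNIV. \<bar>q $ j\<bar>) * bb"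
    using assms(3) by (intro abs_inner_le) (auto intro: less_imp_le)
  have "\<bar>gz z q\<bar> \<le> \<bar>rew z\<bar> + \<bar>inner q (cons z)\<bar> + \<bar>inner q (repl z)\<bar>"
    unfolding gz_def by (auto simp: max_def abs_le_iff)
  also have "\<dots> \<le> rb + (\<Sum>j\<in>UNIV. \<bar>q $ j\<bar>) * ab + (\<Sum>j\<in>UNIV. \<bar>q $ j\<bar>) * bb"
    using a b assms(1) by linarith
  finally show ?thesis by (simp add: algebra_simps)
qed

lemma gz_nonneg: "(\<forall>j. q $ j \<ge> 0) \<Longrightarrow> (\<forall>j. repl z $ j \<ge> 0) \<Longrightarrow> gz z q \<ge> 0"
  unfolding gz_def inner_sum_cart by (auto intro!: add_nonneg_nonneg sum_nonneg)

context prob_big begin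

definition gM :: "real^'m \<Rightarrow> real" where "gM q = (\<integral>z. gz z q \<partial>M)"
definition "Qset = {q::real^'m. \<forall>j. 0 \<le> q $ j}"
definition "gstar = Inf (gM ` Qset)"

lemma meas_gz_M[measurable]: "(\<lambda>z. gz z q) \<in> borel_measurable M"
proof -
  have "(\<lambda>z. gz z q) \<in> borel_measurable borel" by measurable
  then show ?thesis unfolding borel_M_meas .
qed

lemma int_gz: "integrable M (\<lambda>z. gz z q)"
  by (rule M.integrable_const_bound[where B="rb + (\<Sum>j\<in>UNIV. \<bar>q $ j\<bar>) * (ab + bb)"])
     (use AE_M in \<open>rule eventually_mono\<close>, auto intro: gz_bound)

lemma gM_nonneg: "q \<in> Qset \<Longrightarrow> gM q \<ge> 0"
  unfolding gM_def Qset_def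
  by (rule integral_nonneg_AE) (use AE_M in \<open>rule eventually_mono\<close>, auto intro: gz_nonneg)

lemma gM0: "gM 0 \<le> rb"
proof -
  have "gM 0 \<le> (\<integral>z. rb \<partial>M)" unfolding gM_def
    by (rule integral_mono_AE) (use int_gz in simp, simp, use AE_M in \<open>rule eventually_mono\<close>, auto simp: gz_def)
  then show ?thesis by (simp add: M.prob_space)
qed

lemma Q0: "0 \<in> Qset" unfolding Qset_def by simp

lemma gstar_le: "q \<in> Qset \<Longrightarrow> gstar \<le> gM q"
  unfolding gstar_def by (rule cInf_lower) (auto intro!: bdd_belowI[of _ 0] gM_nonneg)

lemma gstar_nonneg: "gstar \<ge> 0"
  unfolding gstar_def using Q0 by (intro cInf_greatest) (auto intro: gM_nonneg)

lemma gstar_rb: "gstar \<le> rb" using gstar_le[OF Q0] gM0 by simp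

lemma comp_meas: "(\<lambda>\<omega>. \<omega> t) \<in> measurable Om M" by simp

lemma E_coord:
  fixes f :: "'m sample \<Rightarrow> real"
  assumes f: "integrable M f"
  shows "integrable Om (\<lambda>\<omega>. f (\<omega> t))" "(\<integral>\<omega>. f (\<omega> t) \<partial>Om) = (\<integral>z. f z \<partial>M)"
proof -
  have D: "distr Om M (\<lambda>\<omega>. \<omega> t) = M" by (rule PS.PiM_component) simp
  have fm: "f \<in> borel_measurable M" using f by simp
  show "integrable Om (\<lambda>\<omega>. f (\<omega> t))"
    using integrable_distr_eq[OF comp_meas[of t] fm] f D by simp
  show "(\<integral>\<omega>. f (\<omega> t) \<partial>Om) = (\<integral>z. f z \<partial>M)"
    using integral_distr[OF comp_meas[of t] fm] D by simp
qed

lemma E_hind_q: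
  assumes q: "q \<in> Qset"
  shows "(\<integral>\<omega>. hindsight_opt T \<omega> \<partial>Om) \<le> real T * gM q"
proof -
  have "(\<integral>\<omega>. hindsight_opt T \<omega> \<partial>Om) \<le> (\<integral>\<omega>. (\<Sum>t=1..T. gz (\<omega> t) q) \<partial>Om)"
    by (rule integral_mono_AE)
       (use int_hind E_coord(1)[OF int_gz] AE_Bnd hind_upper q in \<open>auto simp: Qset_def elim!: eventually_mono\<close>)
  also have "\<dots> = (\<Sum>t=1..T. (\<integral>\<omega>. gz (\<omega> t) q \<partial>Om))"
    by (rule Bochner_Integration.integral_sum) (use E_coord(1)[OF int_gz] in auto)
  also have "\<dots> = real T * gM q" by (simp add: E_coord(2)[OF int_gz] gM_def)
  finally show ?thesis .
qed

lemma E_hind: "(\<integral>\<omega>. hindsight_opt T \<omega> \<partial>Om) \<le> real T * gstar"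
proof -
  have T0: "real T > 0" using T2 by simp
  have "(\<integral>\<omega>. hindsight_opt T \<omega> \<partial>Om) / real T \<le> gstar"
    unfolding gstar_def
  proof (rule cInf_greatest)
    show "gM ` Qset \<noteq> {}" using Q0 by auto
    fix y assume "y \<in> gM ` Qset"
    then obtain q where q: "q \<in> Qset" "y = gM q" by auto
    show "(\<integral>\<omega>. hindsight_opt T \<omega> \<partial>Om) / real T \<le> y"
      using E_hind_q[OF q(1)] T0 q(2) by (simp add: divide_le_eq mult.commute)
  qed
  then show ?thesis using T0 by (simp add: divide_le_eq mult.commute)
qed

end


context prob_big begin

lemma P_upper: "Bnd \<omega> \<Longrightarrow> s \<le> T \<Longrightarrow> P \<omega> s $ j \<le> real s * eta * (bb + ab)"
  using P_lip_iter[of \<omega> 0 s j] P_warm[of 0 \<omega>] by simp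

lemma F_bound:
  assumes B: "Bnd \<omega>" and t: "t \<in> {1..T}"
  shows "\<bar>gz (\<omega> t) (P \<omega> (t-1))\<bar> \<le> rb + (real CARD('m) * (real T * eta * (bb + ab))) * (ab + bb)"
proof -
  have "\<bar>gz (\<omega> t) (P \<omega> (t-1))\<bar> \<le> rb + (\<Sum>j\<in>UNIV. \<bar>P \<omega> (t-1) $ j\<bar>) * (ab + bb)"
    by (rule gz_bound) (use BndD[OF B t] in auto)
  also have "(\<Sum>j\<in>UNIV. \<bar>P \<omega> (t-1) $ j\<bar>) \<le> (\<Sum>j\<in>(UNIV::'m set). real T * eta * (bb + ab))"
  proof (rule sum_mono)
    fix j
    have "P \<omega> (t-1) $ j \<le> real (t-1) * eta * (bb + ab)" by (rule P_upper[OF B]) (use t in auto)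
    also have "\<dots> \<le> real T * eta * (bb + ab)"
      using t eta_pos ab bb by (intro mult_right_mono) auto
    finally show "\<bar>P \<omega> (t-1) $ j\<bar> \<le> real T * eta * (bb + ab)" using P_nonneg by simp
  qed
  then have "(\<Sum>j\<in>UNIV. \<bar>P \<omega> (t-1) $ j\<bar>) * (ab + bb) \<le> (real CARD('m) * (real T * eta * (bb + ab))) * (ab + bb)"
    using ab bb by (intro mult_right_mono) auto
  finally show ?thesis by simp
qed

lemma int_F: "t \<in> {1..T} \<Longrightarrow> integrable Om (\<lambda>\<omega>. gz (\<omega> t) (P \<omega> (t-1)))"
  by (rule PS.integrable_const_bound[where B="rb + (real CARD('m) * (real T * eta * (bb + ab))) * (ab + bb)"])
     (use AE_Bnd F_bound in \<open>auto elim!: eventually_mono\<close>)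

lemma E_F:
  assumes t: "t \<in> {1..T}"
  shows "(\<integral>\<omega>. gz (\<omega> t) (P \<omega> (t-1)) \<partial>Om) \<ge> gstar"
proof -
  define I' where "I' = UNIV - {t}"
  let ?Pi = "PiM I' (\<lambda>_. M)"
  let ?N = "M \<Otimes>\<^sub>M ?Pi"
  define phi where "phi = (\<lambda>p::'m sample \<times> (nat \<Rightarrow> 'm sample). (snd p)(t := fst p))"
  interpret Pi: prob_space ?Pi by (rule prob_space_PiM) (rule M_prob)
  interpret NN: pair_sigma_finite M ?Pi ..
  have phim: "phi \<in> measurable ?N Om"
    unfolding phi_def by (rule measurable_fun_upd[where J=I']) (auto simp: I'_def)
  have D: "distr ?N Om phi = Om"
  proof -
    have "distr ?N (PiM (insert t I') (\<lambda>_. M)) (\<lambda>(x, X). X(t := x)) = PiM (insert t I') (\<lambda>_. M)"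
      by (rule distr_pair_PiM_eq_PiM) (auto intro: M_prob)
    moreover have "insert t I' = UNIV" unfolding I'_def by auto
    moreover have "(\<lambda>(x, X). X(t := x)) = phi" unfolding phi_def by (auto simp: fun_eq_iff)
    ultimately show ?thesis by simp
  qed
  define F where "F = (\<lambda>\<omega>. gz (\<omega> t) (P \<omega> (t-1)))"
  have Fm: "F \<in> borel_measurable Om" unfolding F_def by measurable
  have eqF: "(\<lambda>p. F (phi p)) = (\<lambda>(x, X). gz x (P X (t-1)))"
  proof (rule ext, clarify)
    fix x and X :: "nat \<Rightarrow> 'm sample"
    have "st (X(t := x)) (t-1) = st X (t-1)" by (rule st_causal) (use t in auto)
    then show "F (phi (x, X)) = gz x (P X (t-1))" unfolding F_def phi_def by simp
  qed
  have intF: "integrable Om F" unfolding F_def by (rule int_F[OF t])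
  then have intN: "integrable ?N (\<lambda>(x, X). gz x (P X (t-1)))"
    using integrable_distr_eq[OF phim Fm] D eqF by simp
  have "(\<integral>\<omega>. F \<omega> \<partial>Om) = (\<integral>p. F (phi p) \<partial>?N)"
    using integral_distr[OF phim Fm] D by simp
  also have "\<dots> = (\<integral>X. (\<integral>x. gz x (P X (t-1)) \<partial>M) \<partial>?Pi)"
    unfolding eqF by (rule NN.integral_snd[symmetric]) (rule intN)
  also have "\<dots> = (\<integral>X. gM (P X (t-1)) \<partial>?Pi)" unfolding gM_def ..
  also have "\<dots> \<ge> gstar"
  proof (rule Pi.integral_ge_const)
    show "integrable ?Pi (\<lambda>X. gM (P X (t-1)))"
      unfolding gM_def by (rule NN.integrable_snd) (rule intN)
    show "AE X in ?Pi. gstar \<le> gM (P X (t-1))"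
      by (rule AE_I2) (rule gstar_le, simp add: Qset_def P_nonneg)
  qed
  finally show ?thesis unfolding F_def .
qed

end


context prob_big begin

lemma indep_coords:
  assumes I: "finite I" "I \<noteq> {}"
  shows "PS.indep_vars (\<lambda>_. M) (\<lambda>i \<omega>. \<omega> i) I"
proof (subst PS.indep_vars_iff_distr_eq_PiM')
  show "I \<noteq> {}" by fact
  show "\<And>i. i \<in> I \<Longrightarrow> (\<lambda>\<omega>. \<omega> i) \<in> measurable Om M" by simp
  have "distr Om (PiM I (\<lambda>_. M)) (\<lambda>x. restrict x I) = PiM I (\<lambda>_. M)"
    by (rule PS.distr_PiM_restrict_finite) (use I in auto)
  moreover have "PiM I (\<lambda>i. distr Om M (\<lambda>\<omega>. \<omega> i)) = PiM I (\<lambda>_. M)"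
    by (rule PiM_cong) (auto intro: PS.PiM_component)
  ultimately show "distr Om (PiM I (\<lambda>_. M)) (\<lambda>x. \<lambda>i\<in>I. x i) = PiM I (\<lambda>i. distr Om M (\<lambda>\<omega>. \<omega> i))"
    by (simp add: restrict_def)
qed

lemma int_repl: "integrable M (\<lambda>z. repl z $ j)"
proof -
  have m: "(\<lambda>z. repl z $ j) \<in> borel_measurable M" unfolding borel_M_meas by measurable
  have "AE z in M. norm (repl z $ j) \<le> bb"
    using AE_M by (rule eventually_mono) (auto intro: less_imp_le)
  then show ?thesis
    by (rule M.integrable_const_bound[where B=bb]) (rule m)
qed

lemma window_prob:
  assumes I: "finite I"
  shows "PS.prob {\<omega> \<in> space Om. (\<Sum>t\<in>I. repl (\<omega> t) $ j) < real (card I) * (bl / 2)}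
          \<le> exp (- real (card I) * bl^2 / (2 * bb^2))"
proof (cases "I = {}")
  case True then show ?thesis by simp
next
  case False
  define Xv where "Xv = (\<lambda>i (\<omega>::nat \<Rightarrow> 'm sample). repl (\<omega> i) $ j)"
  define Y where "Y = (\<lambda>\<omega>::nat \<Rightarrow> 'm sample. repl (\<omega> 0) $ j)"
  have mr: "(\<lambda>z::'m sample. repl z $ j) \<in> measurable M borel" unfolding borel_M_meas by measurable
  have distrX: "distr Om borel (\<lambda>\<omega>. repl (\<omega> i) $ j) = distr M borel (\<lambda>z. repl z $ j)" for i
  proof -
    have "distr Om borel (\<lambda>\<omega>. repl (\<omega> i) $ j) = distr (distr Om M (\<lambda>\<omega>. \<omega> i)) borel (\<lambda>z. repl z $ j)"
      by (subst distr_distr) (auto simp: comp_def intro: mr)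
    also have "distr Om M (\<lambda>\<omega>. \<omega> i) = M" by (rule PS.PiM_component) simp
    finally show ?thesis .
  qed
  have ind: "PS.indep_vars (\<lambda>_. borel) Xv I"
    unfolding Xv_def
    by (rule PS.indep_vars_compose2[OF indep_coords[OF I False]]) (rule mr)
  interpret H: Hoeffding_ineq_iid Om I Xv Y 0 bb "PS.expectation Y"
   proof unfold_locales
    show "PS.expectation Y \<equiv> PS.expectation Y" by (rule reflexive)
    show "finite I" by fact
    show "PS.indep_vars (\<lambda>_. borel) Xv I" by fact
    show "\<And>i. i \<in> I \<Longrightarrow> distr Om borel (Xv i) = distr Om borel Y"
      unfolding Xv_def Y_def using distrX by simp
    show "Y \<in> borel_measurable Om" unfolding Y_def by measurable
    have "AE \<omega> in Om. \<bar>rew (\<omega> 0)\<bar> < rb \<and> norm (cons (\<omega> 0)) < ab \<and> (\<forall>j. \<bar>repl (\<omega> 0) $ j\<bar> < bb) \<and> (\<forall>j. repl (\<omega> 0) $ j \<ge> 0)"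
      by (rule AE_PiM_component[OF M_prob]) (use AE_M in auto)
    then show "AE \<omega> in Om. Y \<omega> \<in> {0..bb}"
      unfolding Y_def by (rule eventually_mono) (auto intro: less_imp_le)
   qed
  have mu: "PS.expectation Y = (\<integral>z. repl z $ j \<partial>M)"
    unfolding Y_def by (rule E_coord(2)[OF int_repl])
  define n where "n = real (card I)"
  have n: "n > 0" unfolding n_def using I False by (simp add: card_gt_0_iff)
  define eps where "eps = n * (PS.expectation Y - bl / 2)"
  have mubl: "PS.expectation Y - bl / 2 \<ge> bl / 2" using Eb[of j] mu by simp
  have eps: "eps \<ge> 0" unfolding eps_def using n mubl bl by simp
  have "PS.prob {\<omega> \<in> space Om. (\<Sum>t\<in>I. repl (\<omega> t) $ j) < real (card I) * (bl / 2)}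
     \<le> PS.prob {\<omega> \<in> space Om. (\<Sum>i\<in>I. Xv i \<omega>) \<le> real (card I) * PS.expectation Y - eps}"
    by (rule PS.finite_measure_mono) (auto simp: Xv_def eps_def n_def algebra_simps)
  also have "\<dots> \<le> exp (-2 * eps\<^sup>2 / (real (card I) * (bb - 0)\<^sup>2))"
    by (rule H.Hoeffding_ineq_le[OF eps]) (use bb False in auto)
  also have "\<dots> \<le> exp (- real (card I) * bl^2 / (2 * bb^2))"
  proof -
    have "eps \<ge> n * (bl / 2)" unfolding eps_def using n mubl by (simp add: mult_left_mono)
    then have "eps^2 \<ge> (n * (bl / 2))^2" using n bl by (intro power_mono) auto
    then have "2 * eps^2 / (n * bb^2) \<ge> 2 * (n * (bl / 2))^2 / (n * bb^2)"
      using n bb by (intro divide_right_mono) auto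
    also have "2 * (n * (bl / 2))^2 / (n * bb^2) = n * bl^2 / (2 * bb^2)"
      using n by (simp add: power2_eq_square field_simps)
    finally show ?thesis unfolding n_def by simp
  qed
  finally show ?thesis .
qed

end


context prob_big begin

definition "Ev j I = {\<omega> \<in> space Om. (\<Sum>t\<in>I. repl (\<omega> t) $ j) < real (card I) * (bl / 2)}"
definition "Uw L = {u. 1 \<le> u \<and> u + L \<le> T + 1}"
definition "Bd L = (\<Union>j. \<Union>u\<in>Uw L. Ev j {u..<u+L}) \<union> (\<Union>j. Ev j {1..kn})"

lemma Ev_sets: "Ev j I \<in> sets Om"
proof -
  have [measurable]: "(\<lambda>\<omega>. \<Sum>t\<in>I. repl (\<omega> t) $ j) \<in> borel_measurable Om" by measurable
  show ?thesis unfolding Ev_def by measurable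
qed

lemma Uw_fin: "finite (Uw L)" "card (Uw L) \<le> T + 1"
proof -
  have "Uw L \<subseteq> {1..T+1}" unfolding Uw_def by auto
  then show "finite (Uw L)" "card (Uw L) \<le> T + 1" using finite_subset card_mono[of "{1..T+1}" "Uw L"] by auto
qed

lemma Bd_sets: "Bd L \<in> sets Om"
  unfolding Bd_def using Uw_fin by (intro sets.Un sets.finite_UN ballI Ev_sets) auto

lemma notBd:
  assumes "\<omega> \<in> space Om" "\<omega> \<notin> Bd L"
  shows "Win \<omega> L" "\<forall>j. (\<Sum>t\<in>{1..kn}. repl (\<omega> t) $ j) \<ge> real kn * (bl / 2)"
proof -
  show "Win \<omega> L" unfolding Win_def
  proof (intro allI impI)
    fix j u assume u: "1 \<le> u" "u + L \<le> T + 1"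
    then have "u \<in> Uw L" unfolding Uw_def by auto
    then have "\<omega> \<notin> Ev j {u..<u+L}" using assms unfolding Bd_def by auto
    then show "(\<Sum>t\<in>{u..<u+L}. repl (\<omega> t) $ j) \<ge> real L * (bl / 2)" using assms(1) unfolding Ev_def by auto
  qed
  show "\<forall>j. (\<Sum>t\<in>{1..kn}. repl (\<omega> t) $ j) \<ge> real kn * (bl / 2)"
  proof
    fix j
    have "\<omega> \<notin> Ev j {1..kn}" using assms unfolding Bd_def by auto
    then show "(\<Sum>t\<in>{1..kn}. repl (\<omega> t) $ j) \<ge> real kn * (bl / 2)" using assms(1) unfolding Ev_def by auto
  qed
qed

lemma prob_Bd:
  "PS.prob (Bd L) \<le> real CARD('m) * (real T + 1) * exp (- real L * bl^2 / (2 * bb^2))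
                    + real CARD('m) * exp (- real kn * bl^2 / (2 * bb^2))"
proof -
  let ?A = "(\<Union>j. \<Union>u\<in>Uw L. Ev j {u..<u+L})" and ?B = "(\<Union>j. Ev j {1..kn})"
  have sA: "(\<Union>u\<in>Uw L. Ev j {u..<u+L}) \<in> sets Om" for j using Uw_fin by (intro sets.finite_UN ballI Ev_sets) auto
  have "PS.prob (Bd L) \<le> PS.prob ?A + PS.prob ?B"
    unfolding Bd_def by (rule measure_Un_le) (use sA Uw_fin in \<open>auto intro!: sets.finite_UN Ev_sets\<close>)
  also have "PS.prob ?A \<le> (\<Sum>j\<in>UNIV. PS.prob (\<Union>u\<in>Uw L. Ev j {u..<u+L}))"
    by (rule PS.finite_measure_subadditive_finite) (use sA in auto)
  also have "\<dots> \<le> (\<Sum>j\<in>(UNIV::'m set). (real T + 1) * exp (- real L * bl^2 / (2 * bb^2)))"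
  proof (rule sum_mono)
    fix j
    have "PS.prob (\<Union>u\<in>Uw L. Ev j {u..<u+L}) \<le> (\<Sum>u\<in>Uw L. PS.prob (Ev j {u..<u+L}))"
      by (rule PS.finite_measure_subadditive_finite) (use Uw_fin Ev_sets in auto)
    also have "\<dots> \<le> (\<Sum>u\<in>Uw L. exp (- real L * bl^2 / (2 * bb^2)))"
    proof (rule sum_mono)
      fix u
      show "PS.prob (Ev j {u..<u+L}) \<le> exp (- real L * bl^2 / (2 * bb^2))"
        using window_prob[of "{u..<u + L}" j] by (simp add: Ev_def)
    qed
    also have "\<dots> \<le> (real T + 1) * exp (- real L * bl^2 / (2 * bb^2))"
      using Uw_fin(2)[of L] by simp
    finally show "PS.prob (\<Union>u\<in>Uw L. Ev j {u..<u+L}) \<le> (real T + 1) * exp (- real L * bl^2 / (2 * bb^2))" .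
  qed
  also have "PS.prob ?B \<le> (\<Sum>j\<in>UNIV. PS.prob (Ev j {1..kn}))"
    by (rule PS.finite_measure_subadditive_finite) (use Ev_sets in auto)
  also have "\<dots> \<le> (\<Sum>j\<in>(UNIV::'m set). exp (- real kn * bl^2 / (2 * bb^2)))"
    by (rule sum_mono) (use window_prob[of "{1..kn}"] in \<open>simp add: Ev_def\<close>)
  finally show ?thesis by (simp add: algebra_simps)
qed

lemma reward_AE:
  assumes L: "L \<ge> 1" and C: "real kn * (bl / 2) \<ge> sqrt (H2 L) / eta + ab"
  shows "AE \<omega> in Om. alg_reward rb ab bb bl 9 T \<omega> \<ge> (\<Sum>t\<in>{kn<..T}. gz (\<omega> t) (P \<omega> (t-1)))
      - real (T - kn) * eta * D2 / 2 - real T * rb * indicator (Bd L) \<omega>"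
  using AE_Bnd AE_space
proof eventually_elim
  case (elim \<omega>)
  have "(if (\<forall>t\<in>{kn<..T}. X \<omega> t = xv \<omega> t) then 0 else real T * rb) \<le> real T * rb * indicator (Bd L) \<omega>"
  proof (cases "\<omega> \<in> Bd L")
    case True then show ?thesis using rb by simp
  next
    case False
    have "\<forall>t\<in>{kn<..T}. X \<omega> t = xv \<omega> t"
      using good[OF elim(1) L notBd(1)[OF elim(2) False] notBd(2)[OF elim(2) False] C] by blast
    then show ?thesis using False by simp
  qed
  then show ?case using reward_lower[OF elim(1)] by linarith
qed

lemma regret_main:
  assumes L: "L \<ge> 1" and C: "real kn * (bl / 2) \<ge> sqrt (H2 L) / eta + ab"
  shows "(\<integral>\<omega>. hindsight_opt T \<omega> - alg_reward rb ab bb bl 9 T \<omega> \<partial>Om)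
          \<le> real kn * rb + real T * eta * D2 / 2 + real T * rb * PS.prob (Bd L)"
proof -
  define c where "c = real (T - kn) * eta * D2 / 2"
  have intS: "integrable Om (\<lambda>\<omega>. \<Sum>t\<in>{kn<..T}. gz (\<omega> t) (P \<omega> (t-1)))"
    by (intro Bochner_Integration.integrable_sum int_F) auto
  have intI: "integrable Om (\<lambda>\<omega>. real T * rb * indicator (Bd L) \<omega>)"
    using Bd_sets by (intro integrable_mult_right) (rule integrable_real_indicator, auto simp: PS.emeasure_eq_measure)
  have intR: "integrable Om (\<lambda>\<omega>. (\<Sum>t\<in>{kn<..T}. gz (\<omega> t) (P \<omega> (t-1))) - c - real T * rb * indicator (Bd L) \<omega>)"
    using intS intI by auto
  have "(\<integral>\<omega>. (\<Sum>t\<in>{kn<..T}. gz (\<omega> t) (P \<omega> (t-1))) - c - real T * rb * indicator (Bd L) \<omega> \<partial>Om)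
        \<le> (\<integral>\<omega>. alg_reward rb ab bb bl 9 T \<omega> \<partial>Om)"
    by (rule integral_mono_AE[OF intR int_reward]) (use reward_AE[OF L C] in \<open>simp add: c_def\<close>)
  moreover have "(\<integral>\<omega>. (\<Sum>t\<in>{kn<..T}. gz (\<omega> t) (P \<omega> (t-1))) - c - real T * rb * indicator (Bd L) \<omega> \<partial>Om)
      = (\<Sum>t\<in>{kn<..T}. (\<integral>\<omega>. gz (\<omega> t) (P \<omega> (t-1)) \<partial>Om)) - c - real T * rb * PS.prob (Bd L)"
  proof -
    have "(\<integral>\<omega>. (\<Sum>t\<in>{kn<..T}. gz (\<omega> t) (P \<omega> (t-1))) - c - real T * rb * indicator (Bd L) \<omega> \<partial>Om)
       = (\<integral>\<omega>. (\<Sum>t\<in>{kn<..T}. gz (\<omega> t) (P \<omega> (t-1))) - c \<partial>Om) - (\<integral>\<omega>. real T * rb * indicator (Bd L) \<omega> \<partial>Om)"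
      by (rule Bochner_Integration.integral_diff) (use intS intI in auto)
    also have "(\<integral>\<omega>. (\<Sum>t\<in>{kn<..T}. gz (\<omega> t) (P \<omega> (t-1))) - c \<partial>Om) = (\<integral>\<omega>. (\<Sum>t\<in>{kn<..T}. gz (\<omega> t) (P \<omega> (t-1))) \<partial>Om) - c"
      by (subst Bochner_Integration.integral_diff) (use intS prob_space.prob_space[OF Om_prob] in auto)
    also have "(\<integral>\<omega>. (\<Sum>t\<in>{kn<..T}. gz (\<omega> t) (P \<omega> (t-1))) \<partial>Om) = (\<Sum>t\<in>{kn<..T}. (\<integral>\<omega>. gz (\<omega> t) (P \<omega> (t-1)) \<partial>Om))"
      by (rule Bochner_Integration.integral_sum) (rule int_F, auto)
    also have "(\<integral>\<omega>. real T * rb * indicator (Bd L) \<omega> \<partial>Om) = real T * rb * PS.prob (Bd L)"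
      using Bd_sets by simp
    finally show ?thesis .
  qed
  moreover have "(\<Sum>t\<in>{kn<..T}. (\<integral>\<omega>. gz (\<omega> t) (P \<omega> (t-1)) \<partial>Om)) \<ge> (\<Sum>t\<in>{kn<..T}. gstar)"
    by (rule sum_mono) (rule E_F, auto)
  moreover have "(\<Sum>t\<in>{kn<..T}. gstar) = real (T - kn) * gstar" by simp
  moreover have "(\<integral>\<omega>. hindsight_opt T \<omega> - alg_reward rb ab bb bl 9 T \<omega> \<partial>Om)
      = (\<integral>\<omega>. hindsight_opt T \<omega> \<partial>Om) - (\<integral>\<omega>. alg_reward rb ab bb bl 9 T \<omega> \<partial>Om)"
    by (rule Bochner_Integration.integral_diff[OF int_hind int_reward])
  moreover have "real T * gstar - real (T - kn) * gstar \<le> real kn * rb"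
  proof -
    have "real T - real (T - kn) \<le> real kn" by linarith
    then have "real T * gstar - real (T - kn) * gstar \<le> real kn * gstar"
      using gstar_nonneg by (metis left_diff_distrib mult_right_mono)
    also have "\<dots> \<le> real kn * rb" using gstar_rb by (intro mult_left_mono) auto
    finally show ?thesis .
  qed
  moreover have "c \<le> real T * eta * D2 / 2"
    unfolding c_def using eta_pos D2_nonneg
    by (intro divide_right_mono mult_right_mono) auto
  ultimately show ?thesis using E_hind by linarith
qed

end


lemma ln2_half: "ln (2::real) \<ge> 1/2"
proof -
  have "exp 1 \<le> (4::real)" using exp_le by simp
  then have "1 \<le> ln (4::real)" by (metis exp_gt_zero ln_exp ln_le_cancel_iff zero_less_numeral)
  also have "ln (4::real) = 2 * ln 2"
    using ln_realpow[of 2 2] by simp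
  finally show ?thesis by simp
qed

lemma ln3_one: "ln (3::real) \<ge> 1"
  by (metis exp_le exp_gt_zero ln_exp ln_le_cancel_iff zero_less_numeral)

lemma ln_le_2sqrt: "x > 0 \<Longrightarrow> ln x \<le> 2 * sqrt (x::real)"
proof -
  assume x: "x > 0"
  have "ln (sqrt x) \<le> sqrt x - 1" by (rule ln_le_minus_one) (use x in simp)
  moreover have "ln (sqrt x) = ln x / 2" using x by (simp add: ln_sqrt)
  ultimately show ?thesis by simp
qed

context alg_big begin

definition "mm = real CARD('m)"
definition "c1 = bb + ab"
definition "cL = 6 * bb^2 / bl^2"
definition "dl0 = 1 / (1 + sqrt mm * (D2 / bl + c1) + ab + 2 * rb + D2 + bl)"
definition "T0 = max 3 ((2 * (cL + 1)^2 / dl0^2)^2)"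
definition "WW = alg_W CARD('m) rb ab bb bl"
definition "Lc = nat \<lceil>cL * ln (real T)\<rceil>"

lemma mm_pos: "mm \<ge> 1" unfolding mm_def by simp
lemma cL_pos: "cL > 0" unfolding cL_def using bb bl by simp
lemma sm_nn: "sqrt mm * (D2 / bl + c1) \<ge> 0"
proof -
  have "sqrt mm \<ge> 0" using mm_pos by simp
  moreover have "D2 / bl + c1 \<ge> 0" using D2_nonneg bl ab bb by (simp add: c1_def)
  ultimately show ?thesis by simp
qed

lemma dl0_pos: "dl0 > 0"
  unfolding dl0_def using sm_nn D2_nonneg bl ab rb bb by simp
lemma dl0_prop: "dl0 \<le> 1" "dl0 * (sqrt mm * (D2 / bl + c1)) \<le> 1" "dl0 * ab \<le> 1" "dl0 * (2 * rb + D2) \<le> 1" "dl0 * bl \<le> 1"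
proof -
  define Z where "Z = 1 + sqrt mm * (D2 / bl + c1) + ab + 2 * rb + D2 + bl"
  have nn: "sqrt mm * (D2 / bl + c1) \<ge> 0" by (rule sm_nn)
  have Z: "Z > 0" "dl0 = 1 / Z" unfolding Z_def dl0_def using nn D2_nonneg bl ab rb bb by auto
  show "dl0 \<le> 1" using Z nn D2_nonneg bl ab rb unfolding Z_def by simp
  have gen: "(1 / Z) * a \<le> 1" if "a \<le> Z" for a using that Z by (simp add: field_simps)
  show "dl0 * (sqrt mm * (D2 / bl + c1)) \<le> 1" unfolding Z(2) by (rule gen) (use nn D2_nonneg bl ab rb in \<open>simp add: Z_def\<close>)
  show "dl0 * ab \<le> 1" unfolding Z(2) by (rule gen) (use nn D2_nonneg bl ab rb in \<open>simp add: Z_def\<close>)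
  show "dl0 * (2 * rb + D2) \<le> 1" unfolding Z(2) by (rule gen) (use nn D2_nonneg bl ab rb in \<open>simp add: Z_def\<close>)
  show "dl0 * bl \<le> 1" unfolding Z(2) by (rule gen) (use nn D2_nonneg bl ab rb in \<open>simp add: Z_def\<close>)
qed

lemma WW_ge: "WW \<ge> 2 + 8 * sqrt mm * rb / bl"
proof -
  have "8 * sqrt mm * rb / bl \<le> real_of_int (ceiling (max (8 * sqrt (real CARD('m)) * rb / bl)
      (max (24 * sqrt (real CARD('m)) * (bb + ab) * bb ^ 2 / bl ^ 2)
           ((rb + 2 * real CARD('m) * (bb ^ 2 + ab ^ 2)) / (sqrt (real CARD('m)) * (bb + ab))))))"
    unfolding mm_def by (meson le_of_int_ceiling max.cobounded1 order_trans)
  then show ?thesis unfolding WW_def alg_W_def by simp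
qed

lemma WW_pos: "WW \<ge> 0" using WW_ge rb bl mm_pos by (smt (verit) divide_nonneg_pos mult_nonneg_nonneg real_sqrt_ge_zero)

lemma lnT_pos: "ln (real T) > 0" using T2 by simp

lemma eta_eq: "eta = 1 / sqrt (9 * real T * ln (real T))" by (rule eta_def)

lemma sq9: "sqrt (9 * real T * ln (real T)) = 1 / eta"
  unfolding eta_def using lnT_pos T2 by simp

lemma kn_ge: "real kn \<ge> 4 * WW / (eta * bl)"
proof -
  have "4 * WW * sqrt (9 * real T * ln (real T)) / bl \<le> real_of_int kap"
    unfolding kap_def alg_kappa_def WW_def by simp
  moreover have "4 * WW * sqrt (9 * real T * ln (real T)) / bl = 4 * WW / (eta * bl)"
    unfolding sq9 by simp
  moreover have "real_of_int kap \<le> real kn" unfolding kn_def by simp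
  ultimately show ?thesis by linarith
qed

lemma kn_le: "real kn \<le> 12 * WW * sqrt (real T * ln (real T)) / bl + 1"
proof -
  have nn: "4 * WW * sqrt (9 * real T * ln (real T)) / bl \<ge> 0"
    using WW_pos bl lnT_pos by simp
  have "kap \<ge> 0" unfolding kap_def alg_kappa_def using nn WW_def by simp
  then have "real kn = real_of_int kap" unfolding kn_def by simp
  also have "\<dots> \<le> 4 * WW * sqrt (9 * real T * ln (real T)) / bl + 1"
    unfolding kap_def alg_kappa_def WW_def by linarith
  also have "sqrt (9 * real T * ln (real T)) = 3 * sqrt (real T * ln (real T))"
    by (simp add: real_sqrt_mult)
  finally show ?thesis by simp
qed

end


context alg_big begin

lemma big_lnT: assumes "real T \<ge> T0" shows "ln (real T) \<ge> 1"
proof -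
  have "real T \<ge> 3" using assms unfolding T0_def by simp
  then have "ln (real T) \<ge> ln 3" by simp
  then show ?thesis using ln3_one by simp
qed

lemma Lc_props: assumes "real T \<ge> T0"
  shows "Lc \<ge> 1" "real Lc \<ge> cL * ln (real T)" "real Lc \<le> cL * ln (real T) + 1"
proof -
  have l1: "ln (real T) \<ge> 1" by (rule big_lnT[OF assms])
  have p: "cL * ln (real T) > 0" using l1 cL_pos by simp
  then have c0: "\<lceil>cL * ln (real T)\<rceil> \<ge> 1" by (simp add: one_le_ceiling)
  then show "Lc \<ge> 1" unfolding Lc_def by linarith
  have "real Lc = real_of_int \<lceil>cL * ln (real T)\<rceil>" unfolding Lc_def using c0 by simp
  then show "real Lc \<ge> cL * ln (real T)" "real Lc \<le> cL * ln (real T) + 1" by linarith+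
qed

lemma Lc_eta: assumes "real T \<ge> T0" shows "real Lc * eta \<le> dl0"
proof -
  have l1: "ln (real T) \<ge> 1" by (rule big_lnT[OF assms])
  have Tp: "real T > 0" using T2 by simp
  define A where "A = 2 * (cL + 1)^2 / dl0^2"
  have A0: "A \<ge> 0" unfolding A_def by simp
  have "A^2 \<le> real T" using assms unfolding T0_def A_def by simp
  then have sA: "A \<le> sqrt (real T)" using A0 by (simp add: real_le_rsqrt)
  define y where "y = (cL + 1) * ln (real T) * eta"
  have y0: "y \<ge> 0" unfolding y_def using cL_pos l1 eta_pos by simp
  have "real Lc * eta \<le> (cL * ln (real T) + 1) * eta"
    using Lc_props(3)[OF assms] eta_pos by (simp add: mult_right_mono)
  also have "\<dots> \<le> y" unfolding y_def using l1 eta_pos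
    by (intro mult_right_mono) (auto simp: algebra_simps)
  finally have Ly: "real Lc * eta \<le> y" .
  have "y^2 = (cL + 1)^2 * ln (real T) / (9 * real T)"
  proof -
    have "eta^2 = 1 / (9 * real T * ln (real T))" unfolding eta_def using Tp l1
      by (simp add: power_divide)
    have "y^2 = (cL + 1)^2 * (ln (real T))^2 * eta^2" unfolding y_def by (simp add: power_mult_distrib)
    also have "\<dots> = (cL + 1)^2 * ((ln (real T))^2 / (9 * real T * ln (real T)))"
      using \<open>eta^2 = _\<close> by simp
    also have "(ln (real T))^2 / (9 * real T * ln (real T)) = ln (real T) / (9 * real T)"
      using l1 Tp by (simp add: power2_eq_square)
    finally show ?thesis by simp
  qed
  also have "\<dots> \<le> (cL + 1)^2 * (2 * sqrt (real T)) / real T"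
  proof -
    have "ln (real T) \<le> 2 * sqrt (real T)" by (rule ln_le_2sqrt) (use Tp in simp)
    then have "(cL + 1)^2 * ln (real T) \<le> (cL + 1)^2 * (2 * sqrt (real T))" by (simp add: mult_left_mono)
    then have "(cL + 1)^2 * ln (real T) / (9 * real T) \<le> (cL + 1)^2 * (2 * sqrt (real T)) / (9 * real T)"
      using Tp by (simp add: divide_right_mono)
    also have "\<dots> \<le> (cL + 1)^2 * (2 * sqrt (real T)) / real T"
      using Tp by (simp add: divide_left_mono frac_le)
    finally show ?thesis .
  qed
  also have "\<dots> = 2 * (cL + 1)^2 / sqrt (real T)"
    using Tp by (simp add: field_simps real_sqrt_mult[symmetric])
  also have "\<dots> \<le> dl0^2"
  proof -
    have "A > 0" unfolding A_def using dl0_pos cL_pos by (simp add: add_pos_pos)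
    then have "2 * (cL + 1)^2 / sqrt (real T) \<le> 2 * (cL + 1)^2 / A"
      using sA Tp by (intro divide_left_mono) (auto intro!: mult_pos_pos)
    also have "\<dots> = dl0^2" unfolding A_def using dl0_pos cL_pos by (simp add: field_simps)
    finally show ?thesis .
  qed
  finally have "y \<le> dl0" using y0 dl0_pos by (meson less_imp_le power2_le_imp_le)
  then show ?thesis using Ly by simp
qed

lemma eta_dl0: assumes "real T \<ge> T0" shows "eta \<le> dl0"
proof -
  have "eta \<le> real Lc * eta" using Lc_props(1)[OF assms] eta_pos by simp
  then show ?thesis using Lc_eta[OF assms] by simp
qed

lemma big_C: assumes "real T \<ge> T0" shows "real kn * (bl / 2) \<ge> sqrt (H2 Lc) / eta + ab"
proof -
  have d: "real Lc * eta \<le> dl0" by (rule Lc_eta[OF assms])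
  have e: "eta \<le> dl0" by (rule eta_dl0[OF assms])
  have sm: "sqrt mm \<ge> 0" using mm_pos by simp
  define Hb where "Hb = 2 * sqrt mm * rb / bl + 1"
  have Hb1: "Hb \<ge> 1" unfolding Hb_def using sm rb bl by simp
  have th: "theta Lc = 2 * rb / bl + (eta * (D2 / bl) + real Lc * eta * c1)"
    unfolding theta_def th0_def c1_def using bl by (simp add: field_simps)
  have "eta * (D2 / bl) + real Lc * eta * c1 \<le> dl0 * (D2 / bl) + dl0 * c1"
    using d e D2_nonneg bl ab bb by (intro add_mono mult_right_mono) (auto simp: c1_def)
  then have "sqrt mm * (eta * (D2 / bl) + real Lc * eta * c1) \<le> sqrt mm * (dl0 * (D2 / bl + c1))"
    using sm by (intro mult_left_mono) (auto simp: algebra_simps)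
  also have "\<dots> \<le> 1" using dl0_prop(2) by (simp add: algebra_simps)
  finally have "sqrt mm * theta Lc \<le> Hb" unfolding th Hb_def by (simp add: algebra_simps)
  moreover have "sqrt mm * theta Lc \<ge> 0"
    unfolding theta_def using th0_pos sm eta_pos ab bb by simp
  ultimately have "(sqrt mm * theta Lc)^2 \<le> Hb^2" by (intro power_mono) auto
  moreover have "(sqrt mm * theta Lc)^2 = mm * (theta Lc)^2" using mm_pos by (simp add: power_mult_distrib)
  ultimately have t1: "mm * (theta Lc)^2 \<le> Hb^2" by simp
  have "real Lc * (2 * eta * rb + eta^2 * D2) = (real Lc * eta) * (2 * rb + eta * D2)"
    by (simp add: power2_eq_square algebra_simps)
  also have "\<dots> \<le> dl0 * (2 * rb + D2)"
  proof (rule mult_mono)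
    show "2 * rb + eta * D2 \<le> 2 * rb + D2"
      using e dl0_prop(1) D2_nonneg by (simp add: mult_left_le_one_le eta_pos less_imp_le)
  qed (use d dl0_pos eta_pos rb D2_nonneg in auto)
  also have "\<dots> \<le> 1" by (rule dl0_prop(4))
  also have "\<dots> \<le> Hb^2" using Hb1 by simp
  finally have t2: "real Lc * (2 * eta * rb + eta^2 * D2) \<le> Hb^2" .
  have "H2 Lc \<le> Hb^2" unfolding H2_def using t1 t2 by (simp add: mm_def)
  then have sH: "sqrt (H2 Lc) \<le> Hb" using Hb1 by (simp add: real_sqrt_le_iff real_le_lsqrt)
  have "eta * ab \<le> 1" using e dl0_prop(3) ab by (meson mult_right_mono less_imp_le order_trans)
  moreover have X0: "sqrt mm * rb / bl \<ge> 0" using sm rb bl by simp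
  moreover have "WW \<ge> 2 + 8 * (sqrt mm * rb / bl)" using WW_ge by simp
  moreover have "Hb = 2 * (sqrt mm * rb / bl) + 1" unfolding Hb_def by simp
  ultimately have "Hb + eta * ab \<le> 2 * WW" by linarith
  then have "(sqrt (H2 Lc) + eta * ab) / eta \<le> 2 * WW / eta"
    using sH eta_pos by (intro divide_right_mono) auto
  moreover have "2 * WW / eta \<le> real kn * (bl / 2)"
  proof -
    have "4 * WW / (eta * bl) * (bl / 2) = 2 * WW / eta" using bl by (simp add: field_simps)
    moreover have "4 * WW / (eta * bl) * (bl / 2) \<le> real kn * (bl / 2)"
      using kn_ge bl by (intro mult_right_mono) auto
    ultimately show ?thesis by simp
  qed
  moreover have "(sqrt (H2 Lc) + eta * ab) / eta = sqrt (H2 Lc) / eta + ab"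
    using eta_pos by (simp add: field_simps)
  ultimately show ?thesis by linarith
qed

lemma exp_neg3: "real T > 0 \<Longrightarrow> exp (- (3 * ln (real T))) = 1 / real T ^ 3"
proof -
  assume Tp: "real T > 0"
  have "exp (3 * ln (real T)) = exp (ln (real T)) ^ 3" using exp_of_nat_mult[of 3 "ln (real T)"] by simp
  also have "\<dots> = real T ^ 3" using Tp by simp
  finally show ?thesis by (simp add: exp_minus inverse_eq_divide)
qed

lemma big_expL: assumes "real T \<ge> T0"
  shows "exp (- real Lc * bl^2 / (2 * bb^2)) \<le> 1 / real T ^ 3"
proof -
  have Tp: "real T > 0" using T2 by simp
  have "real Lc * bl^2 / (2 * bb^2) \<ge> cL * ln (real T) * bl^2 / (2 * bb^2)"
    using Lc_props(2)[OF assms] bl bb by (intro divide_right_mono mult_right_mono) auto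
  also have "cL * ln (real T) * bl^2 / (2 * bb^2) = 3 * ln (real T)"
    unfolding cL_def using bl bb by (simp add: field_simps)
  finally have "- real Lc * bl^2 / (2 * bb^2) \<le> - (3 * ln (real T))" by simp
  then have "exp (- real Lc * bl^2 / (2 * bb^2)) \<le> exp (- (3 * ln (real T)))" by simp
  then show ?thesis using exp_neg3[OF Tp] by simp
qed

lemma big_expK: assumes "real T \<ge> T0"
  shows "exp (- real kn * bl^2 / (2 * bb^2)) \<le> 1 / real T ^ 3"
proof -
  have Tp: "real T > 0" using T2 by simp
  have l1: "ln (real T) \<ge> 1" by (rule big_lnT[OF assms])
  have X0: "sqrt mm * rb / bl \<ge> 0" using mm_pos rb bl by simp
  have "WW \<ge> 2 + 8 * (sqrt mm * rb / bl)" using WW_ge by simp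
  then have W2: "WW \<ge> 2" using X0 by linarith
  have "eta * ln (real T) \<le> eta * (real Lc / cL)"
    using Lc_props(2)[OF assms] cL_pos eta_pos by (intro mult_left_mono) (auto simp: field_simps)
  also have "\<dots> = (real Lc * eta) * (bl^2 / (6 * bb^2))" unfolding cL_def using bl bb by (simp add: field_simps)
  also have "\<dots> \<le> dl0 * (bl^2 / (6 * bb^2))" using Lc_eta[OF assms] by (intro mult_right_mono) auto
  also have "\<dots> = (dl0 * bl) * (bl / (6 * bb^2))" by (simp add: power2_eq_square field_simps)
  also have "\<dots> \<le> 1 * (bl / (6 * bb^2))" using dl0_prop(5) bl bb by (intro mult_right_mono) auto
  finally have el: "eta * ln (real T) \<le> bl / (6 * bb^2)" by simp
  have "real kn * bl^2 / (2 * bb^2) \<ge> (4 * WW / (eta * bl)) * bl^2 / (2 * bb^2)"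
    using kn_ge bl bb by (intro divide_right_mono mult_right_mono) auto
  also have "(4 * WW / (eta * bl)) * bl^2 / (2 * bb^2) = 2 * WW * bl / (eta * bb^2)"
    using bl bb eta_pos by (simp add: power2_eq_square field_simps)
  also have "2 * WW * bl / (eta * bb^2) \<ge> 4 * bl / (eta * bb^2)"
    using W2 bl bb eta_pos by (intro divide_right_mono) auto
  moreover have "4 * bl / (eta * bb^2) \<ge> 3 * ln (real T)"
  proof -
    have "(eta * ln (real T)) * bb^2 \<le> (bl / (6 * bb^2)) * bb^2"
      using el bb by (intro mult_right_mono) auto
    also have "(bl / (6 * bb^2)) * bb^2 = bl / 6" using bb by simp
    finally have "3 * ln (real T) * (eta * bb^2) \<le> 4 * bl" using bl by (simp add: algebra_simps)
    then show ?thesis using eta_pos bb by (simp add: field_simps)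
  qed
  ultimately have "- real kn * bl^2 / (2 * bb^2) \<le> - (3 * ln (real T))" by linarith
  then have "exp (- real kn * bl^2 / (2 * bb^2)) \<le> exp (- (3 * ln (real T)))" by simp
  then show ?thesis using exp_neg3[OF Tp] by simp
qed

end


definition Kfin :: "nat \<Rightarrow> real \<Rightarrow> real \<Rightarrow> real \<Rightarrow> real \<Rightarrow> real" where
  "Kfin m rb ab bb bl =
    (let D2 = real m * (bb + ab)^2; cL = 6 * bb^2 / bl^2;
         dl0 = 1 / (1 + sqrt (real m) * (D2 / bl + (bb + ab)) + ab + 2 * rb + D2 + bl);
         T0 = max 3 ((2 * (cL + 1)^2 / dl0^2)^2)
     in 12 * alg_W m rb ab bb bl * rb / bl + rb + D2 + real m * rb + 4 * T0 * rb)"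

context prob_big begin

lemma Kfin_eq: "Kfin CARD('m) rb ab bb bl = 12 * WW * rb / bl + rb + D2 + mm * rb + 4 * T0 * rb"
  unfolding Kfin_def Let_def WW_def D2_def mm_def T0_def dl0_def cL_def c1_def by simp

lemma regret_small: "(\<integral>\<omega>. hindsight_opt T \<omega> - alg_reward rb ab bb bl 9 T \<omega> \<partial>Om) \<le> 2 * real T * rb"
proof -
  have "(\<integral>\<omega>. hindsight_opt T \<omega> - alg_reward rb ab bb bl 9 T \<omega> \<partial>Om) \<le> (\<integral>\<omega>. 2 * real T * rb \<partial>Om)"
  proof (rule integral_mono_AE)
    show "integrable Om (\<lambda>\<omega>. hindsight_opt T \<omega> - alg_reward rb ab bb bl 9 T \<omega>)"
      using int_hind int_reward by auto
    show "integrable Om (\<lambda>\<omega>. 2 * real T * rb)" by simp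
    show "AE \<omega> in Om. hindsight_opt T \<omega> - alg_reward rb ab bb bl 9 T \<omega> \<le> 2 * real T * rb"
      using AE_Bnd
    proof (rule eventually_mono)
      fix \<omega> :: "nat \<Rightarrow> 'm sample" assume B: "Bnd \<omega>"
      show "hindsight_opt T \<omega> - alg_reward rb ab bb bl 9 T \<omega> \<le> 2 * real T * rb"
        using hind_abs[OF B] reward_abs[OF B] by linarith
    qed
  qed
  then show ?thesis using prob_space.prob_space[OF Om_prob] by simp
qed

lemma sqrtT_lnT: "sqrt (real T) * ln (real T) \<ge> 1/2"
proof -
  have "sqrt (real T) \<ge> 1" using T2 by simp
  moreover have "ln (real T) \<ge> ln 2" using T2 by simp
  then have "ln (real T) \<ge> 1/2" using ln2_half by simp
  ultimately have "sqrt (real T) * ln (real T) \<ge> 1 * (1/2)" by (intro mult_mono) auto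
  then show ?thesis by simp
qed

lemma regret_big:
  assumes big: "real T \<ge> T0"
  shows "(\<integral>\<omega>. hindsight_opt T \<omega> - alg_reward rb ab bb bl 9 T \<omega> \<partial>Om)
     \<le> (12 * WW * rb / bl + rb + D2 + mm * rb) * (sqrt (real T) * ln (real T))"
proof -
  have l1: "ln (real T) \<ge> 1" by (rule big_lnT[OF big])
  have Tp: "real T > 0" using T2 by simp
  have sT: "sqrt (real T) \<ge> 1" using T2 by simp
  define S where "S = sqrt (real T) * ln (real T)"
  have "1 * 1 \<le> sqrt (real T) * ln (real T)" by (rule mult_mono) (use l1 sT in auto)
  then have S1: "S \<ge> 1" unfolding S_def by simp
  have R: "(\<integral>\<omega>. hindsight_opt T \<omega> - alg_reward rb ab bb bl 9 T \<omega> \<partial>Om)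
          \<le> real kn * rb + real T * eta * D2 / 2 + real T * rb * PS.prob (Bd Lc)"
    by (rule regret_main[OF Lc_props(1)[OF big] big_C[OF big]])
  have P: "PS.prob (Bd Lc) \<le> mm * (real T + 1) * (1 / real T ^ 3) + mm * (1 / real T ^ 3)"
  proof -
    have "PS.prob (Bd Lc) \<le> mm * (real T + 1) * exp (- real Lc * bl^2 / (2 * bb^2))
                    + mm * exp (- real kn * bl^2 / (2 * bb^2))"
      using prob_Bd[of Lc] unfolding mm_def .
    also have "\<dots> \<le> mm * (real T + 1) * (1 / real T ^ 3) + mm * (1 / real T ^ 3)"
      using big_expL[OF big] big_expK[OF big] mm_pos
      by (intro add_mono mult_left_mono) auto
    finally show ?thesis .
  qed
  have t3: "real T * rb * PS.prob (Bd Lc) \<le> mm * rb"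
  proof -
    have "real T * rb * PS.prob (Bd Lc) \<le> real T * rb * (mm * (real T + 1) * (1 / real T ^ 3) + mm * (1 / real T ^ 3))"
      using P rb Tp by (intro mult_left_mono) auto
    also have "\<dots> = mm * rb * ((real T + 2) / real T ^ 2)"
      using Tp by (simp add: field_simps power2_eq_square power3_eq_cube)
    also have "(real T + 2) / real T ^ 2 \<le> 1"
    proof -
      have T2r: "real T \<ge> 2" using T2 by simp
      have "2 * real T \<le> real T * real T" using T2r by (intro mult_right_mono) auto
      then have "real T + 2 \<le> real T * real T" using T2r by linarith
      then have "real T + 2 \<le> real T ^ 2" by (simp add: power2_eq_square)
      then show ?thesis using Tp by simp
    qed
    then have "mm * rb * ((real T + 2) / real T ^ 2) \<le> mm * rb * 1"
      using mm_pos rb by (intro mult_left_mono) auto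
    finally show ?thesis by simp
  qed
  have "ln (real T) * 1 \<le> ln (real T) * ln (real T)" using l1 by (intro mult_left_mono) auto
  then have "sqrt (ln (real T)) \<le> sqrt (ln (real T) * ln (real T))" by (intro real_sqrt_le_mono) simp
  then have sl: "sqrt (ln (real T)) \<le> ln (real T)" using l1 by simp
  have t1: "real kn * rb \<le> (12 * WW * rb / bl) * S + rb"
  proof -
    have "real kn * rb \<le> (12 * WW * sqrt (real T * ln (real T)) / bl + 1) * rb"
      using kn_le rb by (intro mult_right_mono) auto
    also have "sqrt (real T * ln (real T)) = sqrt (real T) * sqrt (ln (real T))" by (rule real_sqrt_mult)
    also have "sqrt (real T) * sqrt (ln (real T)) \<le> S" unfolding S_def using sl by (intro mult_left_mono) auto
    then have "(12 * WW * (sqrt (real T) * sqrt (ln (real T))) / bl + 1) * rb \<le> (12 * WW * S / bl + 1) * rb"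
      using WW_pos bl rb by (intro mult_right_mono add_mono divide_right_mono mult_left_mono) auto
    finally show ?thesis by (simp add: algebra_simps)
  qed
  have t2: "real T * eta * D2 / 2 \<le> D2 * S"
  proof -
    have "real T * 1 \<le> real T * (9 * ln (real T))" using l1 Tp by (intro mult_left_mono) auto
    then have "real T \<le> 9 * real T * ln (real T)" by (simp add: algebra_simps)
    then have s1: "sqrt (real T) \<le> sqrt (9 * real T * ln (real T))" by (rule real_sqrt_le_mono)
    have s2: "sqrt (real T) > 0" using Tp by simp
    have s3: "sqrt (9 * real T * ln (real T)) > 0"
    proof -
      have "real T * ln (real T) > 0" using Tp l1 by (intro mult_pos_pos) linarith+
      then show ?thesis by simp
    qed
    have "eta \<le> 1 / sqrt (real T)" unfolding eta_def
      by (rule divide_left_mono[OF s1]) (use mult_pos_pos[OF s3 s2] in auto)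
    then have "real T * eta \<le> real T * (1 / sqrt (real T))" using Tp by (intro mult_left_mono) auto
    also have "real T * (1 / sqrt (real T)) = sqrt (real T)" using real_div_sqrt[of "real T"] by simp
    also have "sqrt (real T) \<le> S"
    proof -
      have "sqrt (real T) * 1 \<le> sqrt (real T) * ln (real T)" using l1 sT by (intro mult_left_mono) auto
      then show ?thesis unfolding S_def by simp
    qed
    finally have "real T * eta \<le> S" .
    then have "real T * eta * D2 \<le> S * D2" using D2_nonneg by (intro mult_right_mono) auto
    moreover have "S * D2 \<ge> 0" using S1 D2_nonneg by simp
    ultimately have "real T * eta * D2 \<le> 2 * (D2 * S)" by (simp add: algebra_simps)
    then show ?thesis by simp
  qed
  have "(rb + mm * rb) * 1 \<le> (rb + mm * rb) * S" using S1 rb mm_pos by (intro mult_left_mono) auto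
  then have "rb + mm * rb \<le> (rb + mm * rb) * S" by simp
  then show ?thesis using R t1 t2 t3 unfolding S_def by (simp add: algebra_simps)
qed

lemma regret_final:
  "(\<integral>\<omega>. hindsight_opt T \<omega> - alg_reward rb ab bb bl 9 T \<omega> \<partial>Om)
     \<le> Kfin CARD('m) rb ab bb bl * sqrt (real T) * ln (real T) ^ 1"
proof -
  define S where "S = sqrt (real T) * ln (real T)"
  have S: "S \<ge> 1/2" unfolding S_def by (rule sqrtT_lnT)
  have W0: "12 * WW * rb / bl + rb + D2 + mm * rb \<ge> 0"
    using WW_pos rb bl D2_nonneg mm_pos by simp
  have T00: "T0 \<ge> 0" unfolding T0_def by simp
  have "(\<integral>\<omega>. hindsight_opt T \<omega> - alg_reward rb ab bb bl 9 T \<omega> \<partial>Om) \<le> (12 * WW * rb / bl + rb + D2 + mm * rb + 4 * T0 * rb) * S"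
  proof (cases "real T \<ge> T0")
    case True
    then have "(\<integral>\<omega>. hindsight_opt T \<omega> - alg_reward rb ab bb bl 9 T \<omega> \<partial>Om) \<le> (12 * WW * rb / bl + rb + D2 + mm * rb) * S"
      unfolding S_def by (rule regret_big)
    also have "\<dots> \<le> (12 * WW * rb / bl + rb + D2 + mm * rb + 4 * T0 * rb) * S"
      using S T00 rb by (intro mult_right_mono) auto
    finally show ?thesis .
  next
    case False
    have "(\<integral>\<omega>. hindsight_opt T \<omega> - alg_reward rb ab bb bl 9 T \<omega> \<partial>Om) \<le> 2 * real T * rb" by (rule regret_small)
    also have "\<dots> \<le> 2 * T0 * rb" using False rb by simp
    also have "\<dots> \<le> (4 * T0 * rb) * S"
    proof -
      have "(4 * T0 * rb) * (1/2) \<le> (4 * T0 * rb) * S" using S T00 rb by (intro mult_left_mono) auto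
      then show ?thesis by simp
    qed
    also have "\<dots> \<le> (12 * WW * rb / bl + rb + D2 + mm * rb + 4 * T0 * rb) * S"
      using W0 S by (intro mult_right_mono) auto
    finally show ?thesis .
  qed
  then show ?thesis unfolding Kfin_eq S_def by (simp add: mult.assoc)
qed

end


theorem theorem1:
  fixes rb ab bb bl :: real
  assumes "rb > 0" "ab > 0" "bb > 0" "bl > 0"
  shows "\<exists>K (k::nat). \<forall>(M :: ('m::finite) sample measure) T.
     bounded_dist M rb ab bb bl \<longrightarrow>
       (\<forall>\<omega>::nat \<Rightarrow> 'm sample. (\<forall>t. \<forall>j. repl (\<omega> t) $ j \<ge> 0) \<longrightarrow>
          (\<forall>t\<in>{1..T}. alg_x rb ab bb bl 9 T \<omega> t \<in> {0, 1}) \<and>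
          prefix_feasible T \<omega> (alg_x rb ab bb bl 9 T \<omega>)) \<and>
       (\<forall>t (\<omega>::nat \<Rightarrow> 'm sample) \<omega>'. (\<forall>k\<le>t. \<omega> k = \<omega>' k) \<longrightarrow>
          alg_x rb ab bb bl 9 T \<omega> t = alg_x rb ab bb bl 9 T \<omega>' t) \<and>
       (T \<ge> 2 \<longrightarrow>
          integrable (PiM UNIV (\<lambda>_::nat. M))
            (\<lambda>\<omega>. hindsight_opt T \<omega> - alg_reward rb ab bb bl 9 T \<omega>) \<and>
          (\<integral>\<omega>. hindsight_opt T \<omega> - alg_reward rb ab bb bl 9 T \<omega> \<partial>PiM UNIV (\<lambda>_::nat. M))
            \<le> K * sqrt T * ln T ^ k)"
proof (rule exI[of _ "Kfin CARD('m) rb ab bb bl"], rule exI[of _ "1::nat"], intro allI impI)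
  fix M :: "'m sample measure" and T :: nat
  assume bd: "bounded_dist M rb ab bb bl"
  interpret A: alg_ctx rb ab bb bl T "TYPE('m)" .
  have P1: "\<forall>\<omega>::nat \<Rightarrow> 'm sample. (\<forall>t. \<forall>j. repl (\<omega> t) $ j \<ge> 0) \<longrightarrow>
          (\<forall>t\<in>{1..T}. alg_x rb ab bb bl 9 T \<omega> t \<in> {0, 1}) \<and>
          prefix_feasible T \<omega> (alg_x rb ab bb bl 9 T \<omega>)"
    using A.X01 A.feasible by blast
  have P2: "\<forall>t (\<omega>::nat \<Rightarrow> 'm sample) \<omega>'. (\<forall>k\<le>t. \<omega> k = \<omega>' k) \<longrightarrow>
          alg_x rb ab bb bl 9 T \<omega> t = alg_x rb ab bb bl 9 T \<omega>' t"
    using A.X_causal by blast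
  have P3: "integrable (PiM UNIV (\<lambda>_::nat. M)) (\<lambda>\<omega>. hindsight_opt T \<omega> - alg_reward rb ab bb bl 9 T \<omega>) \<and>
          (\<integral>\<omega>. hindsight_opt T \<omega> - alg_reward rb ab bb bl 9 T \<omega> \<partial>PiM UNIV (\<lambda>_::nat. M))
            \<le> Kfin CARD('m) rb ab bb bl * sqrt T * ln T ^ 1" if T2: "T \<ge> 2"
  proof -
    interpret B: prob_big rb ab bb bl T "TYPE('m)" M
      by unfold_locales (use assms T2 bd in auto)
    show ?thesis using B.int_hind B.int_reward B.regret_final by auto
  qed
  show "(\<forall>\<omega>::nat \<Rightarrow> 'm sample. (\<forall>t. \<forall>j. repl (\<omega> t) $ j \<ge> 0) \<longrightarrow>
          (\<forall>t\<in>{1..T}. alg_x rb ab bb bl 9 T \<omega> t \<in> {0, 1}) \<and>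
          prefix_feasible T \<omega> (alg_x rb ab bb bl 9 T \<omega>)) \<and>
       (\<forall>t (\<omega>::nat \<Rightarrow> 'm sample) \<omega>'. (\<forall>k\<le>t. \<omega> k = \<omega>' k) \<longrightarrow>
          alg_x rb ab bb bl 9 T \<omega> t = alg_x rb ab bb bl 9 T \<omega>' t) \<and>
       (T \<ge> 2 \<longrightarrow>
          integrable (PiM UNIV (\<lambda>_::nat. M))
            (\<lambda>\<omega>. hindsight_opt T \<omega> - alg_reward rb ab bb bl 9 T \<omega>) \<and>
          (\<integral>\<omega>. hindsight_opt T \<omega> - alg_reward rb ab bb bl 9 T \<omega> \<partial>PiM UNIV (\<lambda>_::nat. M))
            \<le> Kfin CARD('m) rb ab bb bl * sqrt T * ln T ^ 1)"
    using P1 P2 P3 by blast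
qed


end
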